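(* On the étale cover $\tilde U$ (see context), with the lifted Poisson bracket, one has $\{x_i,x_j\}=0$, $\{y_i,y_j\}=0$ and $\{x_i,y_j\}=\delta_{ij}y_j$ for all $1\le i,j\le d$.
   Context: Let $V=\mathbb C^d$ and let $\mathfrak a=(\mathfrak{gl}(V)\ltimes V)\oplus(\mathfrak{gl}(V)\ltimes V^* )$ with basis $e_{ij}$, $e'_{ij}$ (matrix units of the two copies of $\mathfrak{gl}(V)$), $q_i$ (basis of $V$), $p_i$ (basis of $V^*$), with the standard $\mathfrak{gl}$ brackets, $[e_{ij},q_k]=\delta_{jk}q_i$, $[e'_{ij},p_k]=-\delta_{ki}p_j$, and all other brackets of basis elements zero. Let $\mathbb C[\mathfrak Z_d]:=\big(S(\mathfrak a)/S(\mathfrak a)\mathfrak{gl}(V)_{\rm diag}\big)^{\mathfrak{gl}(V)_{\rm diag}}\cong\mathbb C[e_{ij},q_i,p_i]^{\mathfrak{gl}(V)}$, with the Poisson bracket induced from the Lie–Poisson bracket on $S(\mathfrak a)$, where $\mathfrak{gl}(V)_{\rm diag}$ is spanned by $e_{ij}+e'_{ij}$; $\mathfrak Z_d=\operatorname{Spec}\mathbb C[\mathfrak Z_d]$. Let $a_r=\operatorname{Tr}A^r$ where $A=(e_{ij})$, and $b_s=\sum p_{i_1}e_{i_1i_2}\cdots e_{i_si_{s+1}}q_{i_{s+1}}$. Let $U\subset\mathfrak Z_d$ be the open subset where $A$ has $d$ distinct eigenvalues, and $\tilde U\to U$ the étale cover given by orderings of the eigenvalues; the Poisson bracket lifts uniquely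 to $\tilde U$. On $\tilde U$ let $x_1,\dots,x_d$ be the ordered eigenvalues (so $a_r=\sum_i x_i^r$) and $y_i=\sum_{r=0}^{d-1}(-1)^r\sigma_r(x_1,\dots,\widehat{x_i},\dots,x_d)\,b_{d-1-r}$, where $\sigma_r$ is the $r$-th elementary symmetric function. *)

theory Defs
  imports "HOL-Analysis.Analysis"
begin

text \<open>A point of the (unreduced) space: a triple (A, q, p) where A = (e_ij) is a
 d x d complex matrix, q = (q_i), p = (p_i).  Indices range over a finite type 'd
 with CARD('d) = d.\<close>

type_synonym 'd pt = "(complex^'d^'d) \<times> (complex^'d) \<times> (complex^'d)"

definition Amat :: "'d::finite pt \<Rightarrow> complex^'d^'d" where "Amat z = fst z"
definition qvec :: "'d::finite pt \<Rightarrow> complex^'d" where "qvec z = fst (snd z)"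
definition pvec :: "'d::finite pt \<Rightarrow> complex^'d" where "pvec z = snd (snd z)"

fun mpow :: "'a::comm_ring_1^'n^'n \<Rightarrow> nat \<Rightarrow> 'a^'n^'n" where
  "mpow M 0 = mat 1"
| "mpow M (Suc n) = M ** mpow M n"

definition a_fun :: "nat \<Rightarrow> 'd::finite pt \<Rightarrow> complex" where
  "a_fun r z = (\<Sum>i\<in>UNIV. mpow (Amat z) r $ i $ i)"

definition b_fun :: "nat \<Rightarrow> 'd::finite pt \<Rightarrow> complex" where
  "b_fun s z = (\<Sum>i\<in>UNIV. \<Sum>j\<in>UNIV. pvec z $ i * mpow (Amat z) s $ i $ j * qvec z $ j)"

definition esym :: "nat \<Rightarrow> 'i set \<Rightarrow> ('i \<Rightarrow> complex) \<Rightarrow> complex" where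
  "esym r I c = (\<Sum>T | T \<subseteq> I \<and> card T = r. \<Prod>k\<in>T. c k)"

definition y_fun :: "('d::finite \<Rightarrow> 'd pt \<Rightarrow> complex) \<Rightarrow> 'd \<Rightarrow> 'd pt \<Rightarrow> complex" where
  "y_fun x i z = (\<Sum>r<CARD('d). (-1)^r * esym r (UNIV - {i}) (\<lambda>k. x k z)
                      * b_fun (CARD('d) - 1 - r) z)"

definition Edir :: "'d::finite \<Rightarrow> 'd \<Rightarrow> 'd pt" where
  "Edir i j = ((\<chi> k l. if k = i \<and> l = j then 1 else 0), 0, 0)"
definition Qdir :: "'d::finite \<Rightarrow> 'd pt" where
  "Qdir k = (0, axis k 1, 0)"

text \<open>The reduced Lie--Poisson bracket on gl(V)-invariant functions of (e_ij, q_i, p_i):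
 the functions are lifted to S(a) as functions of e, q, p only (no e'), so p_i
 Poisson-commutes with all variables occurring, and
 {F,G} = sum dF/de_ij dG/de_kl (delta_jk e_il - delta_li e_kj)
        + sum (dF/de_ij dG/dq_k - dG/de_ij dF/dq_k) delta_jk q_i.\<close>
definition pbracket :: "('d::finite pt \<Rightarrow> complex) \<Rightarrow> ('d pt \<Rightarrow> complex) \<Rightarrow> 'd pt \<Rightarrow> complex" where
  "pbracket F G z =
     (let dF = frechet_derivative F (at z); dG = frechet_derivative G (at z); A = Amat z in
      (\<Sum>i\<in>UNIV. \<Sum>j\<in>UNIV. \<Sum>k\<in>UNIV. \<Sum>l\<in>UNIV.
          dF (Edir i j) * dG (Edir k l) *
          ((if j = k then A $ i $ l else 0) - (if l = i then A $ k $ j else 0)))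
    + (\<Sum>i\<in>UNIV. \<Sum>j\<in>UNIV.
          (dF (Edir i j) * dG (Qdir j) - dG (Edir i j) * dF (Qdir j)) * qvec z $ i))"

end

theory Submission
  imports Defs
begin


definition smat :: "'a::times \<Rightarrow> 'a^'n^'m \<Rightarrow> 'a^'n^'m" where
  "smat c M = (\<chi> i j. c * M$i$j)"

lemma smat_nth[simp]: "smat c M $ i $ j = c * M $ i $ j"
  by (simp add: smat_def)

lemma smat_mult_left: "smat c (M::'a::comm_semiring_1^'n^'m) ** B = smat c (M ** B)"
  by (simp add: vec_eq_iff matrix_matrix_mult_def sum_distrib_left mult.assoc)

lemma smat_mult_right: "(A::'a::comm_semiring_1^'n^'m) ** smat c M = smat c (A ** M)"
  by (simp add: vec_eq_iff matrix_matrix_mult_def sum_distrib_left ac_simps)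

definition rowrep :: "'a^'n^'n \<Rightarrow> 'n \<Rightarrow> 'a^'n \<Rightarrow> 'a^'n^'n" where
  "rowrep M a v = (\<chi> i. if i = a then v else M $ i)"

definition Emat :: "'n \<Rightarrow> 'n \<Rightarrow> complex^'n^'n" where
  "Emat a b = (\<chi> k l. if k = a \<and> l = b then 1 else 0)"

lemma det_minus_sE:
  fixes M :: "complex^'n::finite^'n"
  shows "det (M - smat s (Emat a b)) = det M - s * det (rowrep M a (axis b 1))"
proof -
  have eq: "M - smat s (Emat a b) = (\<chi> i. if i = a then M$a + (-s) *s axis b 1 else M$i)"
    by (auto simp: vec_eq_iff Emat_def axis_def)
  have "det (\<chi> i. if i = a then M$a + (-s) *s axis b 1 else M$i)
     = det (\<chi> i. if i = a then M$a else M$i) + det (\<chi> i. if i = a then (-s) *s axis b 1 else M$i)"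
    by (rule det_row_add)
  also have "(\<chi> i. if i = a then M$a else M$i) = M" by (simp add: vec_eq_iff)
  also have "det (\<chi> i. if i = a then (-s) *s axis b 1 else M$i) = (-s) * det (rowrep M a (axis b 1))"
    unfolding rowrep_def by (rule det_row_mul)
  finally show ?thesis using eq by simp
qed

lemma adj_row:
  fixes M :: "'a::comm_ring_1^'n::finite^'n"
  shows "(\<Sum>b\<in>UNIV. M$c$b * det (rowrep M a (axis b 1))) = (if c = a then det M else 0)"
proof -
  have "(\<Sum>b\<in>UNIV. M$c$b * det (rowrep M a (axis b 1)))
      = (\<Sum>b\<in>UNIV. det (\<chi> i. if i = a then M$c$b *s axis b 1 else M$i))"
    unfolding rowrep_def by (rule sum.cong[OF refl], rule det_row_mul[symmetric])
  also have "\<dots> = det (\<chi> i. if i = a then (\<Sum>b\<in>UNIV. M$c$b *s axis b 1) else M$i)"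
    by (rule det_linear_row_sum[symmetric]) simp
  also have "(\<Sum>b\<in>UNIV. M$c$b *s axis b 1) = M$c" by (rule basis_expansion)
  also have "det (\<chi> i. if i = a then M$c else M$i) = (if c = a then det M else 0)"
  proof (cases "c = a")
    case True
    then have "(\<chi> i. if i = a then M$c else M$i) = M" by (simp add: vec_eq_iff)
    then show ?thesis using True by simp
  next
    case False
    show ?thesis
      using False
      by (intro trans[OF det_identical_rows[of a c]]) (auto simp: row_def vec_eq_iff)
  qed
  finally show ?thesis .
qed



locale setting =
  fixes S :: "'d::finite pt set" and x :: "'d \<Rightarrow> 'd pt \<Rightarrow> complex"
  assumes S_open: "open S"
    and x_diff: "\<And>i. x i differentiable_on S"
    and x_dist: "\<And>z i j. z \<in> S \<Longrightarrow> i \<noteq> j \<Longrightarrow> x i z \<noteq> x j z"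
    and x_det: "\<And>z t. z \<in> S \<Longrightarrow> det (mat t - Amat z) = (\<Prod>i\<in>UNIV. t - x i z)"
begin

definition Dx where "Dx i z = frechet_derivative (x i) (at z)"

lemma x_diff_at: "z \<in> S \<Longrightarrow> x i differentiable (at z)"
  using x_diff[of i] S_open by (simp add: differentiable_on_eq_differentiable_at)

lemma Dx_has: "z \<in> S \<Longrightarrow> (x i has_derivative Dx i z) (at z)"
  unfolding Dx_def using x_diff_at frechet_derivative_works by blast

lemma Dx_lin: "z \<in> S \<Longrightarrow> bounded_linear (Dx i z)"
  using Dx_has has_derivative_bounded_linear by blast

lemma line_deriv:
  assumes "z \<in> S"
  shows "((\<lambda>s::real. x i (z + s *\<^sub>R v)) has_derivative (\<lambda>s. of_real s * Dx i z v)) (at 0)"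
proof -
  have l: "((\<lambda>s::real. z + s *\<^sub>R v) has_derivative (\<lambda>s. s *\<^sub>R v)) (at 0)"
    by (auto intro!: derivative_eq_intros)
  have "((x i \<circ> (\<lambda>s::real. z + s *\<^sub>R v)) has_derivative (Dx i z \<circ> (\<lambda>s. s *\<^sub>R v))) (at 0)"
    by (rule diff_chain_at[OF l]) (simp add: Dx_has assms)
  moreover have "(Dx i z \<circ> (\<lambda>s. s *\<^sub>R v)) = (\<lambda>s. of_real s * Dx i z v)"
  proof
    fix s :: real
    have "Dx i z (s *\<^sub>R v) = s *\<^sub>R Dx i z v"
      by (rule linear_scale[OF bounded_linear.linear[OF Dx_lin[OF assms]]])
    then show "(Dx i z \<circ> (\<lambda>s. s *\<^sub>R v)) s = of_real s * Dx i z v"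
      by (simp add: scaleR_conv_of_real)
  qed
  ultimately show ?thesis by (simp add: comp_def)
qed

lemma open_T: "open {s::real. z + s *\<^sub>R v \<in> S}"
proof -
  have "open ((\<lambda>s::real. z + s *\<^sub>R v) -` S)"
    by (rule continuous_open_vimage[OF S_open]) (auto intro!: continuous_intros)
  then show ?thesis by (simp add: vimage_def)
qed

lemma Amat_line: "Amat (z + s *\<^sub>R v) = Amat z + s *\<^sub>R Amat v"
  by (simp add: Amat_def)

lemma Dx_Q:
  assumes z: "z \<in> S"
  shows "Dx i z (Qdir c) = 0"
proof -
  let ?v = "Qdir c :: 'd pt"
  let ?T = "{s::real. z + s *\<^sub>R ?v \<in> S}"
  let ?h = "\<lambda>s::real. x i (z + s *\<^sub>R ?v)"
  have AQ: "Amat ?v = 0" by (simp add: Qdir_def Amat_def)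
  have root: "\<exists>m. ?h s = x m z" if "s \<in> ?T" for s
  proof -
    have "(\<Prod>m\<in>UNIV. ?h s - x m (z + s *\<^sub>R ?v)) = (\<Prod>m\<in>UNIV. ?h s - x m z)"
      using x_det[of "z + s *\<^sub>R ?v" "?h s"] x_det[OF z, of "?h s"] that
      by (simp add: Amat_line AQ)
    moreover have "(\<Prod>m\<in>UNIV. ?h s - x m (z + s *\<^sub>R ?v)) = 0"
      by (rule prod_zero) auto
    ultimately show ?thesis by auto
  qed
  let ?F = "(\<lambda>m. x m z) ` (UNIV - {i})"
  have clF: "closed ?F" by (rule finite_imp_closed) simp
  have nF: "x i z \<notin> ?F"
  proof
    assume "x i z \<in> ?F"
    then obtain m where "m \<noteq> i" "x i z = x m z" by auto
    with x_dist[OF z, of i m] show False by simp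
  qed
  have "\<exists>e>0. \<forall>y\<in>?F. e \<le> dist (x i z) y"
    by (rule separate_point_closed[OF clF nF])
  then obtain e where e: "e > 0" "\<And>y. y \<in> ?F \<Longrightarrow> e \<le> dist (x i z) y"
    by blast
  have "continuous (at 0) ?h"
    by (rule has_derivative_continuous[OF line_deriv[OF z]])
  then obtain d1 where d1: "d1 > 0" "\<And>s. dist s 0 < d1 \<Longrightarrow> dist (?h s) (?h 0) < e"
    unfolding continuous_at_eps_delta using e(1) by blast
  have "0 \<in> ?T" using z by simp
  then obtain d2 where d2: "d2 > 0" "ball 0 d2 \<subseteq> ?T"
    using open_T[of z ?v] open_contains_ball by blast
  have eq: "x i z = ?h s" if "dist s 0 < min d1 d2" for s
  proof -
    have "s \<in> ?T" using d2 that by (auto simp: dist_commute)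
    then obtain m where m: "?h s = x m z" using root by blast
    have "dist (?h s) (x i z) < e" using d1(2)[of s] that by simp
    show ?thesis
    proof (cases "m = i")
      case True then show ?thesis using m by simp
    next
      case False
      then have "e \<le> dist (x i z) (x m z)" using e(2) by auto
      then show ?thesis using \<open>dist (?h s) (x i z) < e\<close> m by (simp add: dist_commute)
    qed
  qed
  have "((\<lambda>s::real. x i z) has_derivative (\<lambda>s. 0)) (at 0)" by simp
  then have "(?h has_derivative (\<lambda>s. 0)) (at 0)"
    by (rule has_derivative_transform_within[where d="min d1 d2"]) (use d1 d2 eq in auto)
  with line_deriv[OF z, of i ?v] have "(\<lambda>s::real. of_real s * Dx i z ?v) = (\<lambda>s. 0)"
    by (rule has_derivative_unique)
  then show ?thesis by (metis mult_1 of_real_1)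
qed

lemma Amat_E: "Amat (Edir a b) = Emat a b"
  by (simp add: Amat_def Edir_def Emat_def)

lemma scaleR_Emat: "s *\<^sub>R Emat a b = smat (of_real s) (Emat a b)"
  unfolding vec_eq_iff by (auto simp: Emat_def complex_eq_iff)

lemma eig_R:
  assumes z: "z \<in> S"
  shows "det (rowrep (mat t - Amat z) a (axis b 1)) =
         (\<Sum>i\<in>UNIV. Dx i z (Edir a b) * (\<Prod>j\<in>UNIV - {i}. t - x j z))"
proof -
  let ?v = "Edir a b :: 'd pt"
  let ?T = "{s::real. z + s *\<^sub>R ?v \<in> S}"
  let ?R = "det (rowrep (mat t - Amat z) a (axis b 1))"
  let ?f = "\<lambda>s::real. det (mat t - Amat z) - s *\<^sub>R ?R"
  let ?g = "\<lambda>s::real. \<Prod>m\<in>UNIV. t - x m (z + s *\<^sub>R ?v)"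
  have fd: "(?f has_derivative (\<lambda>h. - (h *\<^sub>R ?R))) (at 0)"
    by (auto intro!: derivative_eq_intros)
  have gd: "(?g has_derivative (\<lambda>h. \<Sum>m\<in>UNIV. (0 - (of_real h * Dx m z ?v)) *
                (\<Prod>j\<in>UNIV - {m}. t - x j (z + 0 *\<^sub>R ?v)))) (at 0)"
    by (intro has_derivative_prod has_derivative_diff has_derivative_const line_deriv[OF z])
  have fg: "?f s = ?g s" if "s \<in> ?T" for s
  proof -
    have "?g s = det (mat t - Amat (z + s *\<^sub>R ?v))" using x_det that by simp
    also have "mat t - Amat (z + s *\<^sub>R ?v) = (mat t - Amat z) - smat (of_real s) (Emat a b)"
      by (simp add: Amat_line Amat_E scaleR_Emat algebra_simps)
    finally show ?thesis by (simp add: det_minus_sE scaleR_conv_of_real)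
  qed
  have "(?g has_derivative (\<lambda>h. - (h *\<^sub>R ?R))) (at 0)"
    apply (rule has_derivative_transform_within_open[OF fd open_T[of z ?v]])
    using z apply simp
    using fg apply blast
    done
  from has_derivative_unique[OF gd this]
  have "(\<lambda>h. \<Sum>m\<in>UNIV. (0 - (of_real h * Dx m z ?v)) * (\<Prod>j\<in>UNIV - {m}. t - x j (z + 0 *\<^sub>R ?v)))
      = (\<lambda>h. - (h *\<^sub>R ?R))" .
  from fun_cong[OF this, of 1]
  have "(\<Sum>m\<in>UNIV. (0 - (Dx m z ?v)) * (\<Prod>j\<in>UNIV - {m}. t - x j z)) = - ?R"
    by simp
  then show ?thesis by (simp add: sum_negf)
qed

end


lemma vieta:
  fixes f :: "'i \<Rightarrow> complex"
  assumes K: "finite K"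
  shows "(\<Prod>k\<in>K. s - f k) = (\<Sum>r\<le>card K. (-1)^r * esym r K f * s^(card K - r))"
proof -
  have "(\<Prod>k\<in>K. s - f k) = (\<Sum>X\<in>Pow K. (-1) ^ card X * (\<Prod>k\<in>X. f k) * (\<Prod>k\<in>K-X. s))"
    by (rule prod_diff_conv_sum[OF K])
  also have "\<dots> = (\<Sum>X\<in>Pow K. (-1) ^ card X * (\<Prod>k\<in>X. f k) * s ^ (card K - card X))"
    by (rule sum.cong[OF refl]) (use K in \<open>auto simp: card_Diff_subset finite_subset\<close>)
  also have "\<dots> = (\<Sum>r\<le>card K. \<Sum>X\<in>{X. X \<in> Pow K \<and> card X = r}.
                     (-1) ^ card X * (\<Prod>k\<in>X. f k) * s ^ (card K - card X))"
    by (rule sum.group[symmetric]) (use K in \<open>auto simp: card_mono\<close>)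
  also have "\<dots> = (\<Sum>r\<le>card K. (-1)^r * esym r K f * s^(card K - r))"
  proof (rule sum.cong[OF refl])
    fix r assume "r \<in> {..card K}"
    have "(\<Sum>X\<in>{X. X \<in> Pow K \<and> card X = r}. (-1) ^ card X * (\<Prod>k\<in>X. f k) * s ^ (card K - card X))
        = (\<Sum>X\<in>{T. T \<subseteq> K \<and> card T = r}. (-1) ^ r * s ^ (card K - r) * (\<Prod>k\<in>X. f k))"
      by (rule sum.cong) (auto simp: ac_simps)
    also have "\<dots> = (-1)^r * esym r K f * s^(card K - r)"
      by (simp add: esym_def sum_distrib_left ac_simps)
    finally show "(\<Sum>X\<in>{X. X \<in> Pow K \<and> card X = r}. (-1) ^ card X * (\<Prod>k\<in>X. f k) * s ^ (card K - card X))
        = (-1)^r * esym r K f * s^(card K - r)" .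
  qed
  finally show ?thesis .
qed

lemma vieta_d:
  fixes f :: "'d::finite \<Rightarrow> complex"
  shows "(\<Prod>k\<in>UNIV-{j}. s - f k) =
     (\<Sum>r<CARD('d). (-1)^r * esym r (UNIV-{j}) f * s^(CARD('d) - 1 - r))"
proof -
  have c: "card (UNIV - {j} :: 'd set) = CARD('d) - 1" by (simp add: card_Diff_subset)
  have pos: "0 < CARD('d)" by simp
  have "{..CARD('d) - 1} = {..<CARD('d)}"
  proof (rule set_eqI)
    fix r
    show "r \<in> {..CARD('d) - 1} \<longleftrightarrow> r \<in> {..<CARD('d)}"
      using pos by (simp only: atMost_iff lessThan_iff) linarith
  qed
  then show ?thesis using vieta[of "UNIV - {j}" s f] c by simp
qed

lemma mult_sum_right: "(A::'a::comm_semiring_1^'n^'m) ** (\<Sum>k\<in>K. f k) = (\<Sum>k\<in>K. A ** f k)"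
  by (induct K rule: infinite_finite_induct) (auto simp: matrix_add_ldistrib)

lemma matrix_add_rdistrib': "((B + C) ** (A::'a::comm_semiring_1^'n^'m)) = (B ** A) + (C ** A)"
  by (simp add: vec_eq_iff matrix_matrix_mult_def distrib_right sum.distrib)

lemma mult_sum_left: "(\<Sum>k\<in>K. f k) ** (B::'a::comm_semiring_1^'n^'m) = (\<Sum>k\<in>K. f k ** B)"
  by (induct K rule: infinite_finite_induct) (auto simp: matrix_add_rdistrib')

lemma smat_sum: "smat c (\<Sum>k\<in>K. f k) = (\<Sum>k\<in>K. smat c (f k :: 'a::comm_semiring_1^'n^'m))"
  by (induct K rule: infinite_finite_induct) (auto simp: vec_eq_iff distrib_left smat_def)

lemma smat_smat[simp]: "smat c (smat d M) = smat (c * d) (M::'a::comm_semiring_1^'n^'m)"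
  by (simp add: vec_eq_iff mult.assoc)

lemma smat_1[simp]: "smat 1 M = (M::'a::comm_semiring_1^'n^'m)"
  by (simp add: vec_eq_iff)

lemma smat_0[simp]: "smat 0 M = (0::'a::comm_semiring_1^'n^'m)"
  by (simp add: vec_eq_iff)

lemma smat_zero[simp]: "smat c 0 = (0::'a::comm_semiring_1^'n^'m)"
  by (simp add: vec_eq_iff)

lemma sum_nth2: "(\<Sum>k\<in>K. f k) $ a $ b = (\<Sum>k\<in>K. f k $ a $ b)"
  by (simp add: sum_component)

lemma matN_entry: "((mat t - A) ** (M::complex^'n::finite^'n)) $ c $ a = t * M $ c $ a - (A ** M) $ c $ a"
proof -
  have "((mat t - A) ** M) $ c $ a = (\<Sum>k\<in>UNIV. (mat t - A) $ c $ k * M$k$a)"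
    unfolding matrix_matrix_mult_def by (simp only: vec_lambda_beta)
  also have "\<dots> = (\<Sum>k\<in>UNIV. (mat t $ c $ k) * M$k$a) - (\<Sum>k\<in>UNIV. A $ c $ k * M$k$a)"
    by (simp only: vector_minus_component left_diff_distrib sum_subtractf)
  also have "(\<lambda>k. (mat t $ c $ k) * M$k$a) = (\<lambda>k. if c = k then t * M$k$a else 0)"
    by (auto simp: mat_def)
  also have "(\<Sum>k\<in>UNIV. A $ c $ k * M$k$a) = (A ** M) $ c $ a"
    unfolding matrix_matrix_mult_def by (simp only: vec_lambda_beta)
  finally show ?thesis by simp
qed

context setting begin

definition N :: "'d \<Rightarrow> 'd pt \<Rightarrow> complex^'d^'d" where
  "N i z = (\<chi> b a. Dx i z (Edir a b))"

definition cj :: "'d \<Rightarrow> 'd pt \<Rightarrow> complex" where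
  "cj j z = (\<Prod>k\<in>UNIV-{j}. x j z - x k z)"

lemma cj_nz: "z \<in> S \<Longrightarrow> cj j z \<noteq> 0"
  unfolding cj_def using x_dist by auto

lemma key_t:
  assumes z: "z \<in> S"
  shows "(\<Sum>i\<in>UNIV. ((mat t - Amat z) ** N i z)$c$a * (\<Prod>j\<in>UNIV-{i}. t - x j z))
       = (if c = a then (\<Prod>j\<in>UNIV. t - x j z) else 0)"
proof -
  let ?M = "mat t - Amat z"
  have "(\<Sum>i\<in>UNIV. (?M ** N i z)$c$a * (\<Prod>j\<in>UNIV-{i}. t - x j z))
      = (\<Sum>i\<in>UNIV. \<Sum>b\<in>UNIV. ?M$c$b * (Dx i z (Edir a b) * (\<Prod>j\<in>UNIV-{i}. t - x j z)))"
    unfolding matrix_matrix_mult_def N_def by (simp add: sum_distrib_right sum_distrib_left mult_ac)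
  also have "\<dots> = (\<Sum>b\<in>UNIV. ?M$c$b * det (rowrep ?M a (axis b 1)))"
    by (subst sum.swap) (simp add: eig_R[OF z] sum_distrib_left)
  also have "\<dots> = (if c = a then det ?M else 0)" by (rule adj_row)
  finally show ?thesis using x_det[OF z] by simp
qed

lemma sum_single:
  fixes F :: "'d \<Rightarrow> complex"
  assumes "\<And>i. i \<noteq> k \<Longrightarrow> F i = 0"
  shows "(\<Sum>i\<in>UNIV. F i) = F k"
proof -
  have "(\<Sum>i\<in>UNIV. F i) = F k + (\<Sum>i\<in>UNIV-{k}. F i)"
    by (rule sum.remove) auto
  also have "(\<Sum>i\<in>UNIV-{k}. F i) = 0" by (rule sum.neutral) (use assms in auto)
  finally show ?thesis by simp
qed

lemma AN: assumes z: "z \<in> S" shows "Amat z ** N k z = smat (x k z) (N k z)"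
proof -
  have "((Amat z) ** N k z)$c$a = x k z * N k z $c$a" for c a
  proof -
    let ?t = "x k z"
    have e1: "(\<Sum>i\<in>UNIV. ((mat ?t - Amat z) ** N i z)$c$a * (\<Prod>j\<in>UNIV-{i}. ?t - x j z))
        = ((mat ?t - Amat z) ** N k z)$c$a * (\<Prod>j\<in>UNIV-{k}. ?t - x j z)"
      by (rule sum_single) (auto intro!: prod_zero)
    have e2: "(if c = a then (\<Prod>j\<in>UNIV. ?t - x j z) else 0) = 0"
      by (auto intro!: prod_zero)
    have "((mat ?t - Amat z) ** N k z)$c$a * (\<Prod>j\<in>UNIV-{k}. ?t - x j z) = 0"
      using key_t[OF z, of ?t c a] unfolding e1 e2 .
    then have "((mat ?t - Amat z) ** N k z)$c$a * cj k z = 0"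
      by (simp only: cj_def)
    then have "((mat ?t - Amat z) ** N k z)$c$a = 0" using cj_nz[OF z] by simp
    then show ?thesis by (simp add: matN_entry)
  qed
  then show ?thesis by (simp add: vec_eq_iff)
qed

lemma sumN: assumes z: "z \<in> S" shows "(\<Sum>k\<in>UNIV. N k z) = mat 1"
proof -
  have "finite (range (\<lambda>j. x j z))" by simp
  from ex_new_if_finite[OF infinite_UNIV_char_0[where 'a=complex] this]
  obtain t where t: "t \<notin> range (\<lambda>j. x j z)" by blast
  have P: "(\<Prod>j\<in>UNIV. t - x j z) \<noteq> 0" using t by auto
  have "(\<Sum>k\<in>UNIV. N k z) $ c $ a = mat 1 $ c $ a" for c a
  proof -
    have "(\<Sum>i\<in>UNIV. ((mat t - Amat z) ** N i z)$c$a * (\<Prod>j\<in>UNIV-{i}. t - x j z))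
        = (\<Sum>i\<in>UNIV. N i z $c$a * ((t - x i z) * (\<Prod>j\<in>UNIV-{i}. t - x j z)))"
    proof (rule sum.cong[OF refl])
      fix i
      have "((mat t - Amat z) ** N i z)$c$a = (t - x i z) * N i z $c$a"
        by (simp add: matN_entry AN[OF z] left_diff_distrib)
      then show "((mat t - Amat z) ** N i z)$c$a * (\<Prod>j\<in>UNIV-{i}. t - x j z)
          = N i z $c$a * ((t - x i z) * (\<Prod>j\<in>UNIV-{i}. t - x j z))" by simp
    qed
    also have "\<dots> = (\<Sum>i\<in>UNIV. N i z $c$a * (\<Prod>j\<in>UNIV. t - x j z))"
    proof (rule sum.cong[OF refl])
      fix i
      show "N i z $c$a * ((t - x i z) * (\<Prod>j\<in>UNIV-{i}. t - x j z)) = N i z $c$a * (\<Prod>j\<in>UNIV. t - x j z)"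
        using prod.remove[of UNIV i "\<lambda>j. t - x j z"] by simp
    qed
    finally have "(\<Sum>i\<in>UNIV. N i z $c$a) * (\<Prod>j\<in>UNIV. t - x j z)
       = (if c = a then (\<Prod>j\<in>UNIV. t - x j z) else 0)"
      using key_t[OF z, of t c a] by (simp add: sum_distrib_right)
    then have "(\<Sum>i\<in>UNIV. N i z $c$a) = (if c = a then 1 else 0)"
    proof (cases "c = a")
      case True
      with \<open>(\<Sum>i\<in>UNIV. N i z $c$a) * (\<Prod>j\<in>UNIV. t - x j z) = _\<close> P show ?thesis
        by (metis mult_cancel_right2)
    next
      case False
      with \<open>(\<Sum>i\<in>UNIV. N i z $c$a) * (\<Prod>j\<in>UNIV. t - x j z) = _\<close> P show ?thesis
        by simp
    qed
    then show ?thesis by (simp add: sum_nth2 mat_def)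
  qed
  then show ?thesis by (simp add: vec_eq_iff)
qed

end


lemma sum_single_gen:
  fixes F :: "'d::finite \<Rightarrow> 'a::comm_monoid_add"
  assumes "\<And>i. i \<noteq> k \<Longrightarrow> F i = 0"
  shows "(\<Sum>i\<in>UNIV. F i) = F k"
proof -
  have "(\<Sum>i\<in>UNIV. F i) = F k + (\<Sum>i\<in>UNIV-{k}. F i)"
    by (rule sum.remove) auto
  also have "(\<Sum>i\<in>UNIV-{k}. F i) = 0" by (rule sum.neutral) (use assms in auto)
  finally show ?thesis by simp
qed

lemma smat_sum_scalar: "(\<Sum>r\<in>R. smat (f r) M) = smat (\<Sum>r\<in>R. f r) (M::'a::comm_semiring_1^'n^'m)"
  by (induct R rule: infinite_finite_induct) (auto simp: vec_eq_iff distrib_right)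

lemma smat_cancel: "smat c X = smat c Y \<Longrightarrow> (c::complex) \<noteq> 0 \<Longrightarrow> X = (Y::complex^'n^'m)"
  by (simp add: vec_eq_iff)

context setting begin

definition coefj :: "'d \<Rightarrow> 'd pt \<Rightarrow> nat \<Rightarrow> complex" where
  "coefj j z r = (-1)^r * esym r (UNIV - {j}) (\<lambda>k. x k z)"

definition Pm :: "'d \<Rightarrow> 'd pt \<Rightarrow> complex^'d^'d" where
  "Pm j z = (\<Sum>r<CARD('d). smat (coefj j z r) (mpow (Amat z) (CARD('d) - 1 - r)))"

lemma mpowN: assumes z: "z \<in> S" shows "mpow (Amat z) n ** N k z = smat (x k z ^ n) (N k z)"
proof (induct n)
  case 0 then show ?case by simp
next
  case (Suc n)
  have "mpow (Amat z) (Suc n) ** N k z = Amat z ** (mpow (Amat z) n ** N k z)"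
    by (simp add: matrix_mul_assoc)
  also have "\<dots> = smat (x k z ^ Suc n) (N k z)"
    by (simp add: Suc smat_mult_right AN[OF z] mult.commute)
  finally show ?case .
qed

lemma poly_at: "(\<Sum>r<CARD('d). coefj j z r * s ^ (CARD('d) - 1 - r)) = (\<Prod>m\<in>UNIV-{j}. s - x m z)"
  unfolding coefj_def using vieta_d[where f="\<lambda>k. x k z" and j=j and s=s] by simp

lemma PmN: assumes z: "z \<in> S"
  shows "Pm j z ** N k z = smat (if k = j then cj j z else 0) (N k z)"
proof -
  have "Pm j z ** N k z = (\<Sum>r<CARD('d). smat (coefj j z r * x k z ^ (CARD('d) - 1 - r)) (N k z))"
    unfolding Pm_def by (simp add: mult_sum_left smat_mult_left mpowN[OF z])
  also have "\<dots> = smat (\<Prod>m\<in>UNIV-{j}. x k z - x m z) (N k z)"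
    by (simp only: smat_sum_scalar poly_at)
  also have "(\<Prod>m\<in>UNIV-{j}. x k z - x m z) = (if k = j then cj j z else 0)"
    by (auto simp: cj_def intro!: prod_zero)
  finally show ?thesis .
qed

lemma Pm_eq: assumes z: "z \<in> S" shows "Pm j z = smat (cj j z) (N j z)"
proof -
  have "Pm j z = Pm j z ** (\<Sum>k\<in>UNIV. N k z)" by (simp add: sumN[OF z])
  also have "\<dots> = (\<Sum>k\<in>UNIV. smat (if k = j then cj j z else 0) (N k z))"
    by (simp add: mult_sum_right PmN[OF z])
  also have "\<dots> = smat (cj j z) (N j z)"
    by (subst sum_single_gen[where k=j]) auto
  finally show ?thesis .
qed

lemma NN: assumes z: "z \<in> S" shows "N j z ** N k z = (if k = j then N k z else 0)"
proof -
  have "smat (cj j z) (N j z ** N k z) = smat (cj j z) (if k = j then N k z else 0)"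
    using PmN[OF z, of j k] by (auto simp: Pm_eq[OF z] smat_mult_left)
  then show ?thesis using cj_nz[OF z] by (rule smat_cancel)
qed

lemma A_decomp: assumes z: "z \<in> S" shows "Amat z = (\<Sum>k\<in>UNIV. smat (x k z) (N k z))"
proof -
  have "Amat z = Amat z ** (\<Sum>k\<in>UNIV. N k z)" by (simp add: sumN[OF z])
  also have "\<dots> = (\<Sum>k\<in>UNIV. smat (x k z) (N k z))" by (simp add: mult_sum_right AN[OF z])
  finally show ?thesis .
qed

lemma NA: assumes z: "z \<in> S" shows "N j z ** Amat z = smat (x j z) (N j z)"
proof -
  have "N j z ** Amat z = (\<Sum>k\<in>UNIV. smat (x k z) (N j z ** N k z))"
    by (subst A_decomp[OF z]) (simp add: mult_sum_right smat_mult_right)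
  also have "\<dots> = smat (x j z) (N j z)"
    by (subst sum_single_gen[where k=j]) (auto simp: NN[OF z])
  finally show ?thesis .
qed

lemma R1: "z \<in> S \<Longrightarrow> Amat z ** Pm j z = smat (x j z) (Pm j z)"
  by (simp add: Pm_eq smat_mult_right AN mult.commute)

lemma R2: "z \<in> S \<Longrightarrow> Pm j z ** Amat z = smat (x j z) (Pm j z)"
  by (simp add: Pm_eq smat_mult_left NA mult.commute)

lemma R3: "z \<in> S \<Longrightarrow> Pm j z ** Pm j z = smat (cj j z) (Pm j z)"
  by (simp add: Pm_eq smat_mult_left smat_mult_right NN)

lemma y_eq: "y_fun x j z = (\<Sum>a\<in>UNIV. \<Sum>b\<in>UNIV. pvec z $ a * Pm j z $ a $ b * qvec z $ b)"
proof -
  have "y_fun x j z = (\<Sum>r<CARD('d). \<Sum>a\<in>UNIV. \<Sum>b\<in>UNIV.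
          pvec z $ a * (coefj j z r * mpow (Amat z) (CARD('d) - 1 - r) $ a $ b) * qvec z $ b)"
    unfolding y_fun_def b_fun_def coefj_def by (simp add: sum_distrib_left mult_ac)
  also have "\<dots> = (\<Sum>a\<in>UNIV. \<Sum>b\<in>UNIV. \<Sum>r<CARD('d).
          pvec z $ a * (coefj j z r * mpow (Amat z) (CARD('d) - 1 - r) $ a $ b) * qvec z $ b)"
    by (subst sum.swap) (rule sum.cong[OF refl], rule sum.swap)
  also have "\<dots> = (\<Sum>a\<in>UNIV. \<Sum>b\<in>UNIV. pvec z $ a * Pm j z $ a $ b * qvec z $ b)"
    unfolding Pm_def by (simp add: sum_nth2 sum_distrib_left sum_distrib_right)
  finally show ?thesis .
qed

end


lemma differentiable_prod':
  fixes f :: "'i \<Rightarrow> 'a::real_normed_vector \<Rightarrow> 'b::real_normed_field"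
  assumes "\<And>i. i \<in> I \<Longrightarrow> f i differentiable (at z)"
  shows "(\<lambda>x. \<Prod>i\<in>I. f i x) differentiable (at z)"
proof -
  from assms have "\<forall>i\<in>I. \<exists>f'. (f i has_derivative f') (at z)" by (auto simp: differentiable_def)
  then obtain f' where "\<And>i. i \<in> I \<Longrightarrow> (f i has_derivative f' i) (at z)" by metis
  then have "((\<lambda>x. \<Prod>i\<in>I. f i x) has_derivative (\<lambda>y. \<Sum>i\<in>I. f' i y * (\<Prod>j\<in>I - {i}. f j z))) (at z)"
    by (rule has_derivative_prod)
  then show ?thesis by (auto simp: differentiable_def)
qed

lemma bl_A: "bounded_linear (\<lambda>z::'d::finite pt. Amat z $ a $ b)"
  unfolding Amat_def
  by (intro bounded_linear_compose[OF bounded_linear_vec_nth]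
      bounded_linear_compose[OF bounded_linear_vec_nth] bounded_linear_fst)

lemma bl_q: "bounded_linear (\<lambda>z::'d::finite pt. qvec z $ a)"
  unfolding qvec_def
  by (intro bounded_linear_compose[OF bounded_linear_vec_nth]
      bounded_linear_compose[OF bounded_linear_fst] bounded_linear_snd)

lemma bl_p: "bounded_linear (\<lambda>z::'d::finite pt. pvec z $ a)"
  unfolding pvec_def
  by (intro bounded_linear_compose[OF bounded_linear_vec_nth]
      bounded_linear_compose[OF bounded_linear_snd] bounded_linear_snd)

lemma hd_A: "((\<lambda>z::'d::finite pt. Amat z $ a $ b) has_derivative (\<lambda>h. Amat h $ a $ b)) F"
  by (rule bounded_linear_imp_has_derivative[OF bl_A])
lemma hd_q: "((\<lambda>z::'d::finite pt. qvec z $ a) has_derivative (\<lambda>h. qvec h $ a)) F"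
  by (rule bounded_linear_imp_has_derivative[OF bl_q])
lemma hd_p: "((\<lambda>z::'d::finite pt. pvec z $ a) has_derivative (\<lambda>h. pvec h $ a)) F"
  by (rule bounded_linear_imp_has_derivative[OF bl_p])

lemma diff_mpow: "(\<lambda>z::'d::finite pt. mpow (Amat z) n $ a $ b) differentiable (at z)"
proof (induct n arbitrary: a b)
  case 0 then show ?case by (simp add: mat_def)
next
  case (Suc n)
  have A: "(\<lambda>z::'d pt. Amat z $ a $ c) differentiable (at z)" for c
    using hd_A by (auto simp: differentiable_def)
  show ?case
    by (simp add: matrix_matrix_mult_def) (intro differentiable_sum ballI differentiable_mult A Suc finite)
qed

context setting begin

lemma diff_esym: "z \<in> S \<Longrightarrow> (\<lambda>z. esym r K (\<lambda>k. x k z)) differentiable (at z)"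
  unfolding esym_def
  by (intro differentiable_sum ballI differentiable_prod' x_diff_at) (auto intro: finite_subset)

lemma diff_Pm: "z \<in> S \<Longrightarrow> (\<lambda>z. Pm j z $ a $ b) differentiable (at z)"
  unfolding Pm_def coefj_def
  by (simp add: sum_nth2) (intro differentiable_sum ballI differentiable_mult diff_esym diff_mpow finite_lessThan differentiable_const)

lemma diff_cj: "z \<in> S \<Longrightarrow> cj j differentiable (at z)"
proof -
  assume z: "z \<in> S"
  have "(\<lambda>z. \<Prod>k\<in>UNIV-{j}. x j z - x k z) differentiable (at z)"
    by (intro differentiable_prod' differentiable_diff x_diff_at z)
  then show ?thesis by (simp add: cj_def[abs_def])
qed

definition Dl :: "'d \<Rightarrow> 'd pt \<Rightarrow> 'd pt \<Rightarrow> complex^'d^'d" where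
  "Dl j z h = (\<chi> a b. frechet_derivative (\<lambda>z. Pm j z $ a $ b) (at z) h)"

definition Dc :: "'d \<Rightarrow> 'd pt \<Rightarrow> 'd pt \<Rightarrow> complex" where
  "Dc j z = frechet_derivative (cj j) (at z)"

lemma hd_Pm: "z \<in> S \<Longrightarrow> ((\<lambda>z. Pm j z $ a $ b) has_derivative (\<lambda>h. Dl j z h $ a $ b)) (at z)"
  unfolding Dl_def using diff_Pm frechet_derivative_works by fastforce

lemma hd_cj: "z \<in> S \<Longrightarrow> (cj j has_derivative Dc j z) (at z)"
  unfolding Dc_def using diff_cj frechet_derivative_works by blast

lemma deriv_eq_on_S:
  assumes z: "z \<in> S" and f: "(f has_derivative f') (at z)" and g: "(g has_derivative g') (at z)"
    and eq: "\<And>z'. z' \<in> S \<Longrightarrow> f z' = g z'"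
  shows "f' = g'"
proof -
  have "(g has_derivative f') (at z)"
    by (rule has_derivative_transform_within_open[OF f S_open z]) (rule eq)
  then show ?thesis using g by (rule has_derivative_unique)
qed

lemma E1: assumes z: "z \<in> S"
  shows "Amat h ** Pm j z + Amat z ** Dl j z h = smat (Dx j z h) (Pm j z) + smat (x j z) (Dl j z h)"
proof -
  have "(Amat h ** Pm j z + Amat z ** Dl j z h) $ a $ b = (smat (Dx j z h) (Pm j z) + smat (x j z) (Dl j z h)) $ a $ b" for a b
  proof -
    have f: "((\<lambda>z'. \<Sum>c\<in>UNIV. Amat z' $ a $ c * Pm j z' $ c $ b) has_derivative
         (\<lambda>h. \<Sum>c\<in>UNIV. Amat z $ a $ c * Dl j z h $ c $ b + Amat h $ a $ c * Pm j z $ c $ b)) (at z)"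
      by (intro has_derivative_sum has_derivative_mult hd_A hd_Pm z)
    have g: "((\<lambda>z'. x j z' * Pm j z' $ a $ b) has_derivative
         (\<lambda>h. x j z * Dl j z h $ a $ b + Dx j z h * Pm j z $ a $ b)) (at z)"
      by (intro has_derivative_mult hd_Pm Dx_has z)
    have "(\<lambda>h. \<Sum>c\<in>UNIV. Amat z $ a $ c * Dl j z h $ c $ b + Amat h $ a $ c * Pm j z $ c $ b)
        = (\<lambda>h. x j z * Dl j z h $ a $ b + Dx j z h * Pm j z $ a $ b)"
    proof (rule deriv_eq_on_S[OF z f g])
      fix z' assume "z' \<in> S"
      from arg_cong[OF R1[OF this, of j], of "\<lambda>M. M $ a $ b"]
      show "(\<Sum>c\<in>UNIV. Amat z' $ a $ c * Pm j z' $ c $ b) = x j z' * Pm j z' $ a $ b"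
        by (simp add: matrix_matrix_mult_def)
    qed
    from fun_cong[OF this, of h] show ?thesis
      by (simp add: matrix_matrix_mult_def sum.distrib add_ac)
  qed
  then show ?thesis by (simp add: vec_eq_iff)
qed

lemma E2: assumes z: "z \<in> S"
  shows "Dl j z h ** Amat z + Pm j z ** Amat h = smat (Dx j z h) (Pm j z) + smat (x j z) (Dl j z h)"
proof -
  have "(Dl j z h ** Amat z + Pm j z ** Amat h) $ a $ b = (smat (Dx j z h) (Pm j z) + smat (x j z) (Dl j z h)) $ a $ b" for a b
  proof -
    have f: "((\<lambda>z'. \<Sum>c\<in>UNIV. Pm j z' $ a $ c * Amat z' $ c $ b) has_derivative
         (\<lambda>h. \<Sum>c\<in>UNIV. Pm j z $ a $ c * Amat h $ c $ b + Dl j z h $ a $ c * Amat z $ c $ b)) (at z)"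
      by (intro has_derivative_sum has_derivative_mult hd_A hd_Pm z)
    have g: "((\<lambda>z'. x j z' * Pm j z' $ a $ b) has_derivative
         (\<lambda>h. x j z * Dl j z h $ a $ b + Dx j z h * Pm j z $ a $ b)) (at z)"
      by (intro has_derivative_mult hd_Pm Dx_has z)
    have "(\<lambda>h. \<Sum>c\<in>UNIV. Pm j z $ a $ c * Amat h $ c $ b + Dl j z h $ a $ c * Amat z $ c $ b)
        = (\<lambda>h. x j z * Dl j z h $ a $ b + Dx j z h * Pm j z $ a $ b)"
    proof (rule deriv_eq_on_S[OF z f g])
      fix z' assume "z' \<in> S"
      from arg_cong[OF R2[OF this, of j], of "\<lambda>M. M $ a $ b"]
      show "(\<Sum>c\<in>UNIV. Pm j z' $ a $ c * Amat z' $ c $ b) = x j z' * Pm j z' $ a $ b"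
        by (simp add: matrix_matrix_mult_def)
    qed
    from fun_cong[OF this, of h] show ?thesis
      by (simp add: matrix_matrix_mult_def sum.distrib add_ac)
  qed
  then show ?thesis by (simp add: vec_eq_iff)
qed

lemma E3: assumes z: "z \<in> S"
  shows "Dl j z h ** Pm j z + Pm j z ** Dl j z h = smat (Dc j z h) (Pm j z) + smat (cj j z) (Dl j z h)"
proof -
  have "(Dl j z h ** Pm j z + Pm j z ** Dl j z h) $ a $ b = (smat (Dc j z h) (Pm j z) + smat (cj j z) (Dl j z h)) $ a $ b" for a b
  proof -
    have f: "((\<lambda>z'. \<Sum>c\<in>UNIV. Pm j z' $ a $ c * Pm j z' $ c $ b) has_derivative
         (\<lambda>h. \<Sum>c\<in>UNIV. Pm j z $ a $ c * Dl j z h $ c $ b + Dl j z h $ a $ c * Pm j z $ c $ b)) (at z)"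
      by (intro has_derivative_sum has_derivative_mult hd_Pm z)
    have g: "((\<lambda>z'. cj j z' * Pm j z' $ a $ b) has_derivative
         (\<lambda>h. cj j z * Dl j z h $ a $ b + Dc j z h * Pm j z $ a $ b)) (at z)"
      by (intro has_derivative_mult hd_Pm hd_cj z)
    have "(\<lambda>h. \<Sum>c\<in>UNIV. Pm j z $ a $ c * Dl j z h $ c $ b + Dl j z h $ a $ c * Pm j z $ c $ b)
        = (\<lambda>h. cj j z * Dl j z h $ a $ b + Dc j z h * Pm j z $ a $ b)"
    proof (rule deriv_eq_on_S[OF z f g])
      fix z' assume "z' \<in> S"
      from arg_cong[OF R3[OF this, of j], of "\<lambda>M. M $ a $ b"]
      show "(\<Sum>c\<in>UNIV. Pm j z' $ a $ c * Pm j z' $ c $ b) = cj j z' * Pm j z' $ a $ b"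
        by (simp add: matrix_matrix_mult_def)
    qed
    from fun_cong[OF this, of h] show ?thesis
      by (simp add: matrix_matrix_mult_def sum.distrib add_ac)
  qed
  then show ?thesis by (simp add: vec_eq_iff)
qed

end


lemma smat_add_right: "smat c (M + M') = smat c M + smat c (M'::'a::comm_semiring_1^'n^'m)"
  by (simp add: vec_eq_iff distrib_left)

context setting begin

lemma NP: "z \<in> S \<Longrightarrow> N k z ** Pm j z = (if k = j then Pm j z else 0)"
  by (simp add: Pm_eq smat_mult_right NN)

lemma PN: "z \<in> S \<Longrightarrow> Pm j z ** N k z = (if k = j then Pm j z else 0)"
  by (simp add: Pm_eq smat_mult_left NN)

lemma NDl: assumes z: "z \<in> S" and kj: "k \<noteq> j"
  shows "N k z ** Dl j z h = smat (1 / (x j z - x k z)) (N k z ** Amat h ** Pm j z)"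
proof -
  let ?D = "Dl j z h"
  have "N k z ** (Amat h ** Pm j z + Amat z ** ?D) = N k z ** (smat (Dx j z h) (Pm j z) + smat (x j z) ?D)"
    using E1[OF z, of h j] by simp
  then have "N k z ** Amat h ** Pm j z + smat (x k z) (N k z ** ?D) = smat (x j z) (N k z ** ?D)"
    using kj by (simp add: matrix_add_ldistrib smat_mult_right matrix_mul_assoc NA[OF z] smat_mult_left NP[OF z])
  then have "N k z ** Amat h ** Pm j z = smat (x j z - x k z) (N k z ** ?D)"
    by (simp add: vec_eq_iff algebra_simps)
  moreover have "x j z - x k z \<noteq> 0" using x_dist[OF z] kj by simp
  ultimately show ?thesis by (simp add: vec_eq_iff)
qed

lemma DlN: assumes z: "z \<in> S" and lj: "l \<noteq> j"
  shows "Dl j z h ** N l z = smat (1 / (x j z - x l z)) (Pm j z ** Amat h ** N l z)"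
proof -
  let ?D = "Dl j z h"
  have "(?D ** Amat z + Pm j z ** Amat h) ** N l z = (smat (Dx j z h) (Pm j z) + smat (x j z) ?D) ** N l z"
    using E2[OF z, of j h] by simp
  then have "Pm j z ** Amat h ** N l z + smat (x l z) (?D ** N l z) = smat (x j z) (?D ** N l z)"
    using lj by (simp add: matrix_add_rdistrib' smat_mult_right smat_mult_left matrix_mul_assoc[symmetric] AN[OF z] PN[OF z] add_ac)
  then have "Pm j z ** Amat h ** N l z = smat (x j z - x l z) (?D ** N l z)"
    by (simp add: vec_eq_iff algebra_simps)
  moreover have "x j z - x l z \<noteq> 0" using x_dist[OF z] lj by simp
  ultimately show ?thesis by (simp add: vec_eq_iff)
qed

lemma NDlN: assumes z: "z \<in> S"
  shows "N j z ** Dl j z h ** N j z = smat (Dc j z h) (N j z)"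
proof -
  let ?D = "Dl j z h" and ?c = "cj j z" and ?N = "N j z"
  have PN': "Pm j z ** ?N = smat ?c ?N" using PN[OF z, of j j] Pm_eq[OF z] by simp
  have NP': "?N ** Pm j z = smat ?c ?N" using NP[OF z, of j j] Pm_eq[OF z] by simp
  have "?N ** (?D ** Pm j z + Pm j z ** ?D) ** ?N = ?N ** (smat (Dc j z h) (Pm j z) + smat ?c ?D) ** ?N"
    using E3[OF z, of j h] by simp
  moreover have "?N ** (?D ** Pm j z) ** ?N = smat ?c (?N ** ?D ** ?N)"
    by (simp add: matrix_mul_assoc[symmetric] PN' smat_mult_right)
  moreover have "?N ** (Pm j z ** ?D) ** ?N = smat ?c (?N ** ?D ** ?N)"
    by (simp add: matrix_mul_assoc NP' smat_mult_left)
  moreover have "?N ** smat (Dc j z h) (Pm j z) ** ?N = smat (Dc j z h * ?c) ?N"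
    by (simp add: smat_mult_left smat_mult_right NP' NN[OF z])
  moreover have "?N ** smat ?c ?D ** ?N = smat ?c (?N ** ?D ** ?N)"
    by (simp add: smat_mult_left smat_mult_right)
  ultimately have "smat ?c (?N ** ?D ** ?N) + smat ?c (?N ** ?D ** ?N) = smat (Dc j z h * ?c) ?N + smat ?c (?N ** ?D ** ?N)"
    by (simp add: matrix_add_ldistrib matrix_add_rdistrib')
  then have "smat ?c (?N ** ?D ** ?N) = smat ?c (smat (Dc j z h) ?N)"
    by (simp add: vec_eq_iff algebra_simps)
  then show ?thesis using cj_nz[OF z] by (rule smat_cancel)
qed

lemma sum_remove_j: "(\<Sum>k\<in>UNIV. f k) = f j + (\<Sum>k\<in>UNIV-{j}. f k)" for f :: "'d \<Rightarrow> 'a::comm_monoid_add"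
  by (rule sum.remove) auto

lemma Dl_formula: assumes z: "z \<in> S"
  shows "Dl j z h = (\<Sum>k\<in>UNIV-{j}. smat (1 / (x j z - x k z)) (N k z ** Amat h ** Pm j z))
                  + (\<Sum>l\<in>UNIV-{j}. smat (1 / (x j z - x l z)) (Pm j z ** Amat h ** N l z))
                  + smat (Dc j z h) (N j z)"
proof -
  let ?D = "Dl j z h"
  have NjP: "N j z ** Pm j z = Pm j z" using NP[OF z, of j j] by simp
  have "?D = (\<Sum>k\<in>UNIV. N k z) ** ?D" by (simp add: sumN[OF z])
  also have "\<dots> = N j z ** ?D + (\<Sum>k\<in>UNIV-{j}. N k z ** ?D)"
    by (subst mult_sum_left, rule sum_remove_j)
  also have "(\<Sum>k\<in>UNIV-{j}. N k z ** ?D) = (\<Sum>k\<in>UNIV-{j}. smat (1 / (x j z - x k z)) (N k z ** Amat h ** Pm j z))"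
    by (rule sum.cong[OF refl]) (simp add: NDl[OF z])
  also have "N j z ** ?D = N j z ** ?D ** (\<Sum>l\<in>UNIV. N l z)" by (simp add: sumN[OF z])
  also have "\<dots> = N j z ** ?D ** N j z + (\<Sum>l\<in>UNIV-{j}. N j z ** (?D ** N l z))"
    by (subst mult_sum_right, subst sum_remove_j[where j=j], simp only: matrix_mul_assoc)
  also have "(\<Sum>l\<in>UNIV-{j}. N j z ** (?D ** N l z)) = (\<Sum>l\<in>UNIV-{j}. smat (1 / (x j z - x l z)) (Pm j z ** Amat h ** N l z))"
    by (rule sum.cong[OF refl]) (simp add: DlN[OF z] smat_mult_right matrix_mul_assoc NjP)
  also have "N j z ** ?D ** N j z = smat (Dc j z h) (N j z)" by (rule NDlN[OF z])
  finally show ?thesis by (simp add: add_ac)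
qed

lemma Dc_formula: assumes z: "z \<in> S"
  shows "Dc j z h = (\<Sum>k\<in>UNIV-{j}. (Dx j z h - Dx k z h) * (\<Prod>m\<in>UNIV-{j}-{k}. x j z - x m z))"
proof -
  have "(cj j has_derivative (\<lambda>h. \<Sum>k\<in>UNIV-{j}. (Dx j z h - Dx k z h) * (\<Prod>m\<in>UNIV-{j}-{k}. x j z - x m z))) (at z)"
    unfolding cj_def[abs_def]
    by (intro has_derivative_prod has_derivative_diff Dx_has z)
  then have "Dc j z = (\<lambda>h. \<Sum>k\<in>UNIV-{j}. (Dx j z h - Dx k z h) * (\<Prod>m\<in>UNIV-{j}-{k}. x j z - x m z))"
    unfolding Dc_def by (rule frechet_derivative_at[symmetric])
  then show ?thesis by simp
qed

definition Dy :: "'d \<Rightarrow> 'd pt \<Rightarrow> 'd pt \<Rightarrow> complex" where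
  "Dy j z = frechet_derivative (y_fun x j) (at z)"

lemma Dy_formula: assumes z: "z \<in> S"
  shows "Dy j z h = (\<Sum>a\<in>UNIV. \<Sum>b\<in>UNIV.
           pvec h $ a * Pm j z $ a $ b * qvec z $ b + pvec z $ a * Dl j z h $ a $ b * qvec z $ b
           + pvec z $ a * Pm j z $ a $ b * qvec h $ b)"
proof -
  have yf: "y_fun x j = (\<lambda>z. \<Sum>a\<in>UNIV. \<Sum>b\<in>UNIV. pvec z $ a * Pm j z $ a $ b * qvec z $ b)"
    using y_eq by (simp add: fun_eq_iff)
  have "((\<lambda>z. \<Sum>a\<in>UNIV. \<Sum>b\<in>UNIV. pvec z $ a * Pm j z $ a $ b * qvec z $ b) has_derivative
     (\<lambda>h. \<Sum>a\<in>UNIV. \<Sum>b\<in>UNIV. pvec z $ a * Pm j z $ a $ b * qvec h $ b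
           + (pvec z $ a * Dl j z h $ a $ b + pvec h $ a * Pm j z $ a $ b) * qvec z $ b)) (at z)"
    by (intro has_derivative_sum has_derivative_mult hd_p hd_q hd_Pm z)
  then have "Dy j z = (\<lambda>h. \<Sum>a\<in>UNIV. \<Sum>b\<in>UNIV. pvec z $ a * Pm j z $ a $ b * qvec h $ b
           + (pvec z $ a * Dl j z h $ a $ b + pvec h $ a * Pm j z $ a $ b) * qvec z $ b)"
    unfolding Dy_def yf by (rule frechet_derivative_at[symmetric])
  then show ?thesis by (simp add: algebra_simps)
qed

end


definition dotp :: "complex^'n \<Rightarrow> complex^'n \<Rightarrow> complex" where
  "dotp u v = (\<Sum>i\<in>UNIV. u$i * v$i)"

definition outer :: "complex^'n \<Rightarrow> complex^'m \<Rightarrow> complex^'m^'n" where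
  "outer v u = (\<chi> i k. v$i * u$k)"

definition bil :: "complex^'n \<Rightarrow> complex^'m^'n \<Rightarrow> complex^'m \<Rightarrow> complex" where
  "bil u M v = (\<Sum>a\<in>UNIV. \<Sum>b\<in>UNIV. u$a * M$a$b * v$b)"

lemma ee_part1:
  fixes f g :: "'d::finite \<Rightarrow> 'd \<Rightarrow> complex" and A :: "complex^'d^'d"
  shows "(\<Sum>i\<in>UNIV. \<Sum>j\<in>UNIV. \<Sum>k\<in>UNIV. \<Sum>l\<in>UNIV. f i j * g k l * (if j = k then A$i$l else 0))
       = (\<Sum>k\<in>UNIV. \<Sum>l\<in>UNIV. (\<Sum>m\<in>UNIV. f m k * A$m$l) * g k l)"
proof -
  have "(\<Sum>i\<in>UNIV. \<Sum>j\<in>UNIV. \<Sum>k\<in>UNIV. \<Sum>l\<in>UNIV. f i j * g k l * (if j = k then A$i$l else 0))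
      = (\<Sum>i\<in>UNIV. \<Sum>j\<in>UNIV. \<Sum>l\<in>UNIV. f i j * g j l * A$i$l)"
  proof (rule sum.cong[OF refl], rule sum.cong[OF refl])
    fix i j
    have "(\<Sum>k\<in>UNIV. \<Sum>l\<in>UNIV. f i j * g k l * (if j = k then A$i$l else 0))
        = (\<Sum>k\<in>UNIV. if j = k then (\<Sum>l\<in>UNIV. f i j * g k l * A$i$l) else 0)"
      by (rule sum.cong) auto
    also have "\<dots> = (\<Sum>l\<in>UNIV. f i j * g j l * A$i$l)" by simp
    finally show "(\<Sum>k\<in>UNIV. \<Sum>l\<in>UNIV. f i j * g k l * (if j = k then A$i$l else 0))
        = (\<Sum>l\<in>UNIV. f i j * g j l * A$i$l)" .
  qed
  also have "\<dots> = (\<Sum>j\<in>UNIV. \<Sum>i\<in>UNIV. \<Sum>l\<in>UNIV. f i j * g j l * A$i$l)"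
    by (rule sum.swap)
  also have "\<dots> = (\<Sum>j\<in>UNIV. \<Sum>l\<in>UNIV. \<Sum>i\<in>UNIV. f i j * g j l * A$i$l)"
    by (rule sum.cong[OF refl], rule sum.swap)
  also have "\<dots> = (\<Sum>k\<in>UNIV. \<Sum>l\<in>UNIV. (\<Sum>m\<in>UNIV. f m k * A$m$l) * g k l)"
    by (simp add: sum_distrib_left sum_distrib_right mult_ac)
  finally show ?thesis .
qed

lemma ee_part2:
  fixes f g :: "'d::finite \<Rightarrow> 'd \<Rightarrow> complex" and A :: "complex^'d^'d"
  shows "(\<Sum>i\<in>UNIV. \<Sum>j\<in>UNIV. \<Sum>k\<in>UNIV. \<Sum>l\<in>UNIV. f i j * g k l * (if l = i then A$k$j else 0))
       = (\<Sum>k\<in>UNIV. \<Sum>l\<in>UNIV. (\<Sum>m\<in>UNIV. A$k$m * f l m) * g k l)"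
proof -
  have "(\<Sum>i\<in>UNIV. \<Sum>j\<in>UNIV. \<Sum>k\<in>UNIV. \<Sum>l\<in>UNIV. f i j * g k l * (if l = i then A$k$j else 0))
      = (\<Sum>i\<in>UNIV. \<Sum>j\<in>UNIV. \<Sum>k\<in>UNIV. f i j * g k i * A$k$j)"
  proof (rule sum.cong[OF refl], rule sum.cong[OF refl], rule sum.cong[OF refl])
    fix i j k
    have "(\<Sum>l\<in>UNIV. f i j * g k l * (if l = i then A$k$j else 0))
        = (\<Sum>l\<in>UNIV. if l = i then f i j * g k l * A$k$j else 0)"
      by (rule sum.cong) auto
    also have "\<dots> = f i j * g k i * A$k$j" by simp
    finally show "(\<Sum>l\<in>UNIV. f i j * g k l * (if l = i then A$k$j else 0)) = f i j * g k i * A$k$j" .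
  qed
  also have "\<dots> = (\<Sum>i\<in>UNIV. \<Sum>k\<in>UNIV. \<Sum>j\<in>UNIV. f i j * g k i * A$k$j)"
    by (rule sum.cong[OF refl], rule sum.swap)
  also have "\<dots> = (\<Sum>k\<in>UNIV. \<Sum>i\<in>UNIV. \<Sum>j\<in>UNIV. f i j * g k i * A$k$j)"
    by (rule sum.swap)
  also have "\<dots> = (\<Sum>k\<in>UNIV. \<Sum>l\<in>UNIV. (\<Sum>m\<in>UNIV. A$k$m * f l m) * g k l)"
    by (simp add: sum_distrib_left sum_distrib_right mult_ac)
  finally show ?thesis .
qed

lemma bracket_abstract:
  fixes f g :: "'d::finite \<Rightarrow> 'd \<Rightarrow> complex" and fq gq :: "'d \<Rightarrow> complex"
    and A :: "complex^'d^'d" and q :: "complex^'d"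
  defines "PF \<equiv> (\<chi> b a. f a b)" and "PG \<equiv> (\<chi> b a. g a b)"
  shows "(\<Sum>i\<in>UNIV. \<Sum>j\<in>UNIV. \<Sum>k\<in>UNIV. \<Sum>l\<in>UNIV.
          f i j * g k l * ((if j = k then A $ i $ l else 0) - (if l = i then A $ k $ j else 0)))
    + (\<Sum>i\<in>UNIV. \<Sum>j\<in>UNIV. (f i j * gq j - g i j * fq j) * q $ i)
   = trace ((PF ** A - A ** PF) ** PG) + trace (outer q (\<chi> c. gq c) ** PF)
     - trace (outer q (\<chi> c. fq c) ** PG)"
proof -
  have e1: "(\<Sum>i\<in>UNIV. \<Sum>j\<in>UNIV. \<Sum>k\<in>UNIV. \<Sum>l\<in>UNIV.
          f i j * g k l * ((if j = k then A $ i $ l else 0) - (if l = i then A $ k $ j else 0)))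
     = (\<Sum>i\<in>UNIV. \<Sum>j\<in>UNIV. \<Sum>k\<in>UNIV. \<Sum>l\<in>UNIV. f i j * g k l * (if j = k then A$i$l else 0))
     - (\<Sum>i\<in>UNIV. \<Sum>j\<in>UNIV. \<Sum>k\<in>UNIV. \<Sum>l\<in>UNIV. f i j * g k l * (if l = i then A$k$j else 0))"
    by (simp add: right_diff_distrib sum_subtractf)
  have t1: "trace ((PF ** A - A ** PF) ** PG)
     = (\<Sum>k\<in>UNIV. \<Sum>l\<in>UNIV. (\<Sum>m\<in>UNIV. f m k * A$m$l) * g k l)
     - (\<Sum>k\<in>UNIV. \<Sum>l\<in>UNIV. (\<Sum>m\<in>UNIV. A$k$m * f l m) * g k l)"
    by (simp add: trace_def matrix_matrix_mult_def PF_def PG_def left_diff_distrib sum_subtractf)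
  have t2: "trace (outer q (\<chi> c. gq c) ** PF) = (\<Sum>i\<in>UNIV. \<Sum>j\<in>UNIV. f i j * gq j * q $ i)"
    by (simp add: trace_def matrix_matrix_mult_def PF_def outer_def mult_ac)
  have t3: "trace (outer q (\<chi> c. fq c) ** PG) = (\<Sum>i\<in>UNIV. \<Sum>j\<in>UNIV. g i j * fq j * q $ i)"
    by (simp add: trace_def matrix_matrix_mult_def PG_def outer_def mult_ac)
  have e2: "(\<Sum>i\<in>UNIV. \<Sum>j\<in>UNIV. (f i j * gq j - g i j * fq j) * q $ i)
     = (\<Sum>i\<in>UNIV. \<Sum>j\<in>UNIV. f i j * gq j * q $ i) - (\<Sum>i\<in>UNIV. \<Sum>j\<in>UNIV. g i j * fq j * q $ i)"
    by (simp add: left_diff_distrib sum_subtractf)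
  show ?thesis
    unfolding e1 e2 t1 t2 t3 ee_part1 ee_part2 by simp
qed



definition Phi :: "('d::finite pt \<Rightarrow> complex) \<Rightarrow> 'd pt \<Rightarrow> complex^'d^'d" where
  "Phi F z = (\<chi> b a. frechet_derivative F (at z) (Edir a b))"

definition Psi :: "('d::finite pt \<Rightarrow> complex) \<Rightarrow> 'd pt \<Rightarrow> complex^'d" where
  "Psi F z = (\<chi> c. frechet_derivative F (at z) (Qdir c))"

lemma pbracket_trace:
  "pbracket F G z = trace ((Phi F z ** Amat z - Amat z ** Phi F z) ** Phi G z)
     + trace (outer (qvec z) (Psi G z) ** Phi F z) - trace (outer (qvec z) (Psi F z) ** Phi G z)"
  unfolding pbracket_def Let_def Phi_def Psi_def
  by (rule bracket_abstract)

lemma matrix_diff_rdistrib: "(B - C) ** (A::'a::comm_ring_1^'n^'m) = B ** A - C ** A"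
  by (simp add: vec_eq_iff matrix_matrix_mult_def left_diff_distrib sum_subtractf)
lemma matrix_diff_ldistrib: "(A::'a::comm_ring_1^'n^'m) ** (B - C) = A ** B - A ** C"
  by (simp add: vec_eq_iff matrix_matrix_mult_def right_diff_distrib sum_subtractf)
lemma matrix_mul_lzero[simp]: "(0::'a::comm_ring_1^'n^'m) ** A = 0"
  by (simp add: vec_eq_iff matrix_matrix_mult_def)
lemma matrix_mul_rzero[simp]: "(A::'a::comm_ring_1^'n^'m) ** 0 = 0"
  by (simp add: vec_eq_iff matrix_matrix_mult_def)

lemma trace_outer: "trace (outer v u ** M) = bil u M (v::complex^'n::finite)"
  by (simp add: trace_def matrix_matrix_mult_def outer_def bil_def sum_distrib_left mult_ac)
     (rule sum.swap)

lemma pb_self: "pbracket F F z = 0"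
proof -
  have "trace ((Amat z ** Phi F z) ** Phi F z) = trace (Phi F z ** (Amat z ** Phi F z))"
    by (rule trace_mul_sym)
  then show ?thesis
    by (simp add: pbracket_trace matrix_diff_rdistrib trace_sub matrix_mul_assoc)
qed

lemma outer_zero_r[simp]: "outer v 0 = 0"
  by (simp add: outer_def vec_eq_iff)

lemma pb_comm:
  assumes "Phi F z = M" "M ** Amat z = Amat z ** M" "Psi F z = 0"
  shows "pbracket F G z = bil (Psi G z) M (qvec z)"
  using assms by (simp add: pbracket_trace trace_outer)

lemma bil_zero_left[simp]: "bil 0 M v = 0"
  by (simp add: bil_def)

lemma dotp_vm: "dotp (u v* M) v = bil u M (v::complex^'n::finite)"
  by (simp add: dotp_def bil_def vector_matrix_mult_def sum_distrib_left sum_distrib_right mult_ac) (rule sum.swap)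

lemma dotp_mv: "dotp u (M *v v) = bil u M (v::complex^'n::finite)"
  by (simp add: dotp_def bil_def matrix_vector_mult_def sum_distrib_left mult_ac)

lemma bil_mv: "bil u M (M' *v v) = bil u (M ** M') (v::complex^'n::finite)"
  by (simp only: dotp_mv[symmetric] matrix_vector_mul_assoc)

lemma bil_vm: "bil (u v* M) M' v = bil u (M ** M') (v::complex^'n::finite)"
  by (simp only: dotp_mv[symmetric] dotp_vm matrix_vector_mul_assoc)

lemma bil_outer: "bil u (outer v w) r = dotp u v * dotp w (r::complex^'n::finite)"
  by (simp add: bil_def outer_def dotp_def sum_product mult_ac)

lemma bil_smat: "bil u (smat c M) r = c * bil u M r"
  by (simp add: bil_def sum_distrib_left mult_ac)

lemma bil_add: "bil u (M + M') r = bil u M r + bil u M' r"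
  by (simp add: bil_def distrib_left distrib_right sum.distrib)

lemma bil_diff: "bil u (M - M') r = bil u M r - bil u M' r"
  by (simp add: bil_def left_diff_distrib right_diff_distrib sum_subtractf)

lemma bil_zero_mat[simp]: "bil u 0 r = 0"
  by (simp add: bil_def)

lemma bil_sum: "bil u (\<Sum>k\<in>K. f k) r = (\<Sum>k\<in>K. bil u (f k) r)"
  by (induct K rule: infinite_finite_induct) (auto simp: bil_add bil_zero_mat)

lemma bil_E: "bil u (X ** Emat a b ** Y) v = (u v* X)$a * (Y *v (v::complex^'n::finite))$b"
proof -
  have "bil u (X ** Emat a b ** Y) v = bil (u v* X) (Emat a b) (Y *v v)"
    by (simp add: bil_vm bil_mv matrix_mul_assoc)
  also have "\<dots> = (u v* X)$a * (Y *v v)$b"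
    unfolding bil_def
  proof -
    have "(\<Sum>b'\<in>UNIV. (u v* X) $ a' * Emat a b $ a' $ b' * (Y *v v) $ b')
        = (if a' = a then (u v* X)$a * (Y *v v)$b else 0)" for a'
    proof (cases "a' = a")
      case True
      then have "(\<Sum>b'\<in>UNIV. (u v* X) $ a' * Emat a b $ a' $ b' * (Y *v v) $ b')
          = (\<Sum>b'\<in>UNIV. if b' = b then (u v* X)$a * (Y *v v)$b else 0)"
        by (intro sum.cong) (auto simp: Emat_def)
      then show ?thesis using True by simp
    next
      case False then show ?thesis by (simp add: Emat_def)
    qed
    then show "(\<Sum>a'\<in>UNIV. \<Sum>b'\<in>UNIV. (u v* X) $ a' * Emat a b $ a' $ b' * (Y *v v) $ b')
        = (u v* X)$a * (Y *v v)$b" by simp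
  qed
  finally show ?thesis .
qed

lemma outer_mult_right: "outer v u ** A = outer v (u v* (A::complex^'n::finite^'n))"
  by (simp add: vec_eq_iff outer_def matrix_matrix_mult_def vector_matrix_mult_def sum_distrib_left mult_ac)

lemma outer_mult_left: "(A::complex^'n::finite^'n) ** outer v u = outer (A *v v) u"
  by (simp add: vec_eq_iff outer_def matrix_matrix_mult_def matrix_vector_mult_def sum_distrib_left sum_distrib_right mult_ac)

lemma outer_smult_l: "outer (c *s v) u = smat c (outer v u)"
  by (simp add: vec_eq_iff outer_def mult_ac)
lemma outer_smult_r: "outer v (c *s u) = smat c (outer v u)"
  by (simp add: vec_eq_iff outer_def mult_ac)
lemma outer_diff_l: "outer (v - v') u = outer v u - outer v' u"
  by (simp add: vec_eq_iff outer_def left_diff_distrib)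
lemma outer_diff_r: "outer v (u - u') = outer v u - outer v u'"
  by (simp add: vec_eq_iff outer_def right_diff_distrib)
lemma outer_sum_l: "outer (\<Sum>k\<in>K. f k) u = (\<Sum>k\<in>K. outer (f k) u)"
  by (induct K rule: infinite_finite_induct) (auto simp: vec_eq_iff outer_def distrib_right)
lemma outer_sum_r: "outer v (\<Sum>k\<in>K. f k) = (\<Sum>k\<in>K. outer v (f k))"
  by (induct K rule: infinite_finite_induct) (auto simp: vec_eq_iff outer_def distrib_left)

lemma smat_mv: "smat c M *v v = c *s (M *v (v::complex^'n::finite))"
  by (simp add: vec_eq_iff matrix_vector_mult_def sum_distrib_left mult_ac)
lemma smat_vm: "u v* smat c M = c *s (u v* (M::complex^'n::finite^'m::finite))"
  by (simp add: vec_eq_iff vector_matrix_mult_def sum_distrib_left mult_ac)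
lemma vm_add: "u v* (M + M') = u v* M + u v* (M'::complex^'n::finite^'m::finite)"
  by (simp add: vec_eq_iff vector_matrix_mult_def distrib_left sum.distrib)
lemma vm_zero: "u v* (0::complex^'n::finite^'m::finite) = 0"
  by (simp add: vec_eq_iff vector_matrix_mult_def)
lemma vm_sum: "u v* (\<Sum>k\<in>K. f k) = (\<Sum>k\<in>K. u v* (f k :: complex^'n::finite^'m::finite))"
  by (induct K rule: infinite_finite_induct) (auto simp: vm_add vm_zero)
lemma mv_sum: "(\<Sum>k\<in>K. f k) *v v = (\<Sum>k\<in>K. (f k :: complex^'n::finite^'m::finite) *v v)"
  by (induct K rule: infinite_finite_induct) (auto simp: matrix_vector_mult_add_rdistrib)
lemma smat_diff_l: "smat a M - smat b M = smat (a - b) (M::complex^'n^'m)"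
  by (simp add: vec_eq_iff left_diff_distrib)
lemma smat_diff_r: "smat a M - smat a M' = smat a (M - M'::complex^'n^'m)"
  by (simp add: vec_eq_iff right_diff_distrib)
lemma sum_smat_diff: "(\<Sum>k\<in>K. f k) - (\<Sum>k\<in>K. g k) = (\<Sum>k\<in>K. f k - g k :: complex^'n^'m)"
  by (simp add: sum_subtractf)



context setting begin

definition PiP :: "'d \<Rightarrow> 'd \<Rightarrow> 'd pt \<Rightarrow> complex" where
  "PiP i k z = (\<Prod>m\<in>UNIV-{i}-{k}. x i z - x m z)"

definition Phiy :: "'d \<Rightarrow> 'd pt \<Rightarrow> complex^'d^'d" where
  "Phiy i z = (\<Sum>k\<in>UNIV-{i}. smat (1 / (x i z - x k z)) (outer (Pm i z *v qvec z) (pvec z v* N k z)))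
         + (\<Sum>l\<in>UNIV-{i}. smat (1 / (x i z - x l z)) (outer (N l z *v qvec z) (pvec z v* Pm i z)))
         + smat (bil (pvec z) (N i z) (qvec z)) (\<Sum>k\<in>UNIV-{i}. smat (PiP i k z) (N i z - N k z))"

lemma Phi_x: "Phi (x i) z = N i z"
  by (simp add: Phi_def N_def Dx_def)

lemma Psi_x: "z \<in> S \<Longrightarrow> Psi (x i) z = 0"
  using Dx_Q by (simp add: Psi_def Dx_def vec_eq_iff)

lemma Dx_E: "Dx k z (Edir a b) = N k z $ b $ a"
  by (simp add: N_def)

lemma Dl_Q: assumes z: "z \<in> S" shows "Dl j z (Qdir c) = 0"
proof -
  have A0: "Amat (Qdir c :: 'd pt) = 0" by (simp add: Qdir_def Amat_def)
  have "Dc j z (Qdir c) = 0" by (simp add: Dc_formula[OF z] Dx_Q[OF z])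
  then show ?thesis by (simp add: Dl_formula[OF z] A0)
qed

lemma Psi_y: assumes z: "z \<in> S" shows "Psi (y_fun x j) z = pvec z v* Pm j z"
proof -
  have "Psi (y_fun x j) z $ c = (pvec z v* Pm j z) $ c" for c
  proof -
    have p0: "pvec (Qdir c :: 'd pt) = 0" by (simp add: Qdir_def pvec_def)
    have q1: "qvec (Qdir c :: 'd pt) = axis c 1" by (simp add: Qdir_def qvec_def)
    have "Psi (y_fun x j) z $ c = Dy j z (Qdir c)" by (simp add: Psi_def Dy_def)
    also have "\<dots> = (\<Sum>a\<in>UNIV. \<Sum>b\<in>UNIV. pvec z $ a * Pm j z $ a $ b * axis c 1 $ b)"
      by (simp add: Dy_formula[OF z] p0 q1 Dl_Q[OF z])
    also have "\<dots> = (\<Sum>a\<in>UNIV. pvec z $ a * Pm j z $ a $ c)"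
      by (simp add: axis_def if_distrib sum.delta cong: if_cong)
    also have "\<dots> = (pvec z v* Pm j z) $ c"
      by (simp add: vector_matrix_mult_def mult_ac)
    finally show ?thesis .
  qed
  then show ?thesis by (simp add: vec_eq_iff)
qed

lemma Phi_y: assumes z: "z \<in> S" shows "Phi (y_fun x i) z = Phiy i z"
proof -
  have "Phi (y_fun x i) z $ b $ a = Phiy i z $ b $ a" for a b
  proof -
    have p0: "pvec (Edir a b :: 'd pt) = 0" by (simp add: Edir_def pvec_def)
    have q0: "qvec (Edir a b :: 'd pt) = 0" by (simp add: Edir_def qvec_def)
    have "Phi (y_fun x i) z $ b $ a = Dy i z (Edir a b)" by (simp add: Phi_def Dy_def)
    also have "\<dots> = bil (pvec z) (Dl i z (Edir a b)) (qvec z)"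
      by (simp add: Dy_formula[OF z] p0 q0 bil_def)
    also have "\<dots> = (\<Sum>k\<in>UNIV-{i}. (1 / (x i z - x k z)) * ((pvec z v* N k z)$a * (Pm i z *v qvec z)$b))
         + (\<Sum>l\<in>UNIV-{i}. (1 / (x i z - x l z)) * ((pvec z v* Pm i z)$a * (N l z *v qvec z)$b))
         + (\<Sum>k\<in>UNIV-{i}. (N i z $ b $ a - N k z $ b $ a) * PiP i k z) * bil (pvec z) (N i z) (qvec z)"
      by (simp add: Dl_formula[OF z] Amat_E bil_add bil_sum bil_smat bil_E Dc_formula[OF z] Dx_E PiP_def)
    also have "\<dots> = Phiy i z $ b $ a"
      by (simp add: Phiy_def sum_nth2 outer_def sum_distrib_left sum_distrib_right mult_ac)
    finally show ?thesis .
  qed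
  then show ?thesis by (simp add: vec_eq_iff)
qed

end


lemma smat_scalar_simp: "smat a (smat b M) = smat (a * b) (M::complex^'n^'m)" by simp

lemma frac_neg1: "(a::complex) \<noteq> b \<Longrightarrow> 1/(a-b)*b - 1/(a-b)*a = -1"
  by (simp add: divide_simps)

lemma frac_pos1: "(a::complex) \<noteq> b \<Longrightarrow> 1/(a-b)*a - 1/(a-b)*b = 1"
  by (simp add: divide_simps)

lemma vm_diff: "u v* (M - M') = u v* M - u v* (M'::complex^'n::finite^'m::finite)"
  by (simp add: vec_eq_iff vector_matrix_mult_def right_diff_distrib sum_subtractf)

lemma mv_diff: "(M - M') *v v = M *v v - (M'::complex^'n::finite^'m::finite) *v v"
  by (simp add: vec_eq_iff matrix_vector_mult_def left_diff_distrib sum_subtractf)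

lemma smat_neg1: "smat (-1) M = - (M::complex^'n^'m)"
  by (simp add: vec_eq_iff)

context setting begin

lemma sum_N_minus: "z \<in> S \<Longrightarrow> (\<Sum>k\<in>UNIV-{i}. N k z) = mat 1 - N i z"
  using sumN[of z] sum_remove_j[of "\<lambda>k. N k z" i] by (simp add: algebra_simps)

lemma X1: assumes z: "z \<in> S"
  shows "(\<Sum>k\<in>UNIV-{i}. smat (1 / (x i z - x k z)) (outer (Pm i z *v qvec z) (pvec z v* N k z))) ** Amat z
       - Amat z ** (\<Sum>k\<in>UNIV-{i}. smat (1 / (x i z - x k z)) (outer (Pm i z *v qvec z) (pvec z v* N k z)))
       = - outer (Pm i z *v qvec z) (pvec z - pvec z v* N i z)"
proof -
  let ?O = "\<lambda>k. outer (Pm i z *v qvec z) (pvec z v* N k z)"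
  have l: "?O k ** Amat z = smat (x k z) (?O k)" for k
    by (simp add: outer_mult_right vector_matrix_mul_assoc NA[OF z] smat_vm outer_smult_r)
  have r: "Amat z ** ?O k = smat (x i z) (?O k)" for k
    by (simp add: outer_mult_left matrix_vector_mul_assoc R1[OF z] smat_mv outer_smult_l)
  have "(\<Sum>k\<in>UNIV-{i}. smat (1 / (x i z - x k z)) (?O k)) ** Amat z
       - Amat z ** (\<Sum>k\<in>UNIV-{i}. smat (1 / (x i z - x k z)) (?O k))
      = (\<Sum>k\<in>UNIV-{i}. smat (1 / (x i z - x k z) * x k z - 1 / (x i z - x k z) * x i z) (?O k))"
    by (simp add: mult_sum_left mult_sum_right smat_mult_left smat_mult_right l r sum_subtractf[symmetric]
        smat_diff_l)
  also have "\<dots> = (\<Sum>k\<in>UNIV-{i}. smat (-1) (?O k))"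
  proof (rule sum.cong[OF refl])
    fix k assume "k \<in> UNIV - {i}"
    then have "x i z - x k z \<noteq> 0" using x_dist[OF z, of i k] by auto
    then have "1 / (x i z - x k z) * x k z - 1 / (x i z - x k z) * x i z = -1"
      by (intro frac_neg1) simp
    then show "smat (1 / (x i z - x k z) * x k z - 1 / (x i z - x k z) * x i z) (?O k) = smat (-1) (?O k)"
      by simp
  qed
  also have "\<dots> = smat (-1) (outer (Pm i z *v qvec z) (pvec z v* (\<Sum>k\<in>UNIV-{i}. N k z)))"
    by (simp add: smat_sum[symmetric] outer_sum_r[symmetric] vm_sum)
  also have "\<dots> = - outer (Pm i z *v qvec z) (pvec z - pvec z v* N i z)"
    by (simp add: sum_N_minus[OF z] vm_diff smat_neg1)
  finally show ?thesis .
qed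

lemma X2: assumes z: "z \<in> S"
  shows "(\<Sum>l\<in>UNIV-{i}. smat (1 / (x i z - x l z)) (outer (N l z *v qvec z) (pvec z v* Pm i z))) ** Amat z
       - Amat z ** (\<Sum>l\<in>UNIV-{i}. smat (1 / (x i z - x l z)) (outer (N l z *v qvec z) (pvec z v* Pm i z)))
       = outer (qvec z - N i z *v qvec z) (pvec z v* Pm i z)"
proof -
  let ?O = "\<lambda>l. outer (N l z *v qvec z) (pvec z v* Pm i z)"
  have l: "?O k ** Amat z = smat (x i z) (?O k)" for k
    by (simp add: outer_mult_right vector_matrix_mul_assoc R2[OF z] smat_vm outer_smult_r)
  have r: "Amat z ** ?O k = smat (x k z) (?O k)" for k
    by (simp add: outer_mult_left matrix_vector_mul_assoc AN[OF z] smat_mv outer_smult_l)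
  have "(\<Sum>k\<in>UNIV-{i}. smat (1 / (x i z - x k z)) (?O k)) ** Amat z
       - Amat z ** (\<Sum>k\<in>UNIV-{i}. smat (1 / (x i z - x k z)) (?O k))
      = (\<Sum>k\<in>UNIV-{i}. smat (1 / (x i z - x k z) * x i z - 1 / (x i z - x k z) * x k z) (?O k))"
    by (simp add: mult_sum_left mult_sum_right smat_mult_left smat_mult_right l r sum_subtractf[symmetric]
        smat_diff_l)
  also have "\<dots> = (\<Sum>k\<in>UNIV-{i}. ?O k)"
  proof (rule sum.cong[OF refl])
    fix k assume "k \<in> UNIV - {i}"
    then have "x i z \<noteq> x k z" using x_dist[OF z, of i k] by auto
    then have "1 / (x i z - x k z) * x i z - 1 / (x i z - x k z) * x k z = 1"
      by (rule frac_pos1)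
    then show "smat (1 / (x i z - x k z) * x i z - 1 / (x i z - x k z) * x k z) (?O k) = ?O k"
      by simp
  qed
  also have "\<dots> = outer ((\<Sum>k\<in>UNIV-{i}. N k z) *v qvec z) (pvec z v* Pm i z)"
    by (simp add: outer_sum_l[symmetric] mv_sum)
  also have "\<dots> = outer (qvec z - N i z *v qvec z) (pvec z v* Pm i z)"
    by (simp add: sum_N_minus[OF z] mv_diff)
  finally show ?thesis .
qed

lemma X3: assumes z: "z \<in> S"
  shows "smat w (\<Sum>k\<in>UNIV-{i}. smat (PiP i k z) (N i z - N k z)) ** Amat z
       - Amat z ** smat w (\<Sum>k\<in>UNIV-{i}. smat (PiP i k z) (N i z - N k z)) = 0"
proof -
  have c: "(N i z - N k z) ** Amat z = Amat z ** (N i z - N k z)" for k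
    by (simp add: matrix_diff_rdistrib matrix_diff_ldistrib NA[OF z] AN[OF z])
  show ?thesis
    by (simp add: smat_mult_left smat_mult_right mult_sum_left mult_sum_right c)
qed

lemma X_formula: assumes z: "z \<in> S"
  shows "Phiy i z ** Amat z - Amat z ** Phiy i z
       = outer (qvec z) (pvec z v* Pm i z) - outer (Pm i z *v qvec z) (pvec z)"
proof -
  let ?S1 = "\<Sum>k\<in>UNIV-{i}. smat (1 / (x i z - x k z)) (outer (Pm i z *v qvec z) (pvec z v* N k z))"
  let ?S2 = "\<Sum>l\<in>UNIV-{i}. smat (1 / (x i z - x l z)) (outer (N l z *v qvec z) (pvec z v* Pm i z))"
  let ?S3 = "smat (bil (pvec z) (N i z) (qvec z)) (\<Sum>k\<in>UNIV-{i}. smat (PiP i k z) (N i z - N k z))"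
  have "Phiy i z ** Amat z - Amat z ** Phiy i z
      = (?S1 ** Amat z - Amat z ** ?S1) + (?S2 ** Amat z - Amat z ** ?S2) + (?S3 ** Amat z - Amat z ** ?S3)"
    unfolding Phiy_def by (simp add: matrix_add_rdistrib' matrix_add_ldistrib algebra_simps)
  also have "\<dots> = - outer (Pm i z *v qvec z) (pvec z - pvec z v* N i z)
       + outer (qvec z - N i z *v qvec z) (pvec z v* Pm i z)"
    by (simp only: X1[OF z] X2[OF z] X3[OF z]) simp
  also have "outer (Pm i z *v qvec z) (pvec z v* N i z) = outer (N i z *v qvec z) (pvec z v* Pm i z)"
    by (simp add: Pm_eq[OF z] smat_mv smat_vm outer_smult_l outer_smult_r)
  then have "- outer (Pm i z *v qvec z) (pvec z - pvec z v* N i z)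
       + outer (qvec z - N i z *v qvec z) (pvec z v* Pm i z)
       = outer (qvec z) (pvec z v* Pm i z) - outer (Pm i z *v qvec z) (pvec z)"
    by (simp add: outer_diff_l outer_diff_r algebra_simps)
  finally show ?thesis .
qed

end


lemma sum_if_rm:
  fixes f :: "'d::finite \<Rightarrow> complex"
  assumes "j \<noteq> i"
  shows "(\<Sum>l\<in>UNIV-{i}. f l * (if l = j then a else 0)) = f j * a"
proof -
  have "(\<Sum>l\<in>UNIV-{i}. f l * (if l = j then a else 0)) = (\<Sum>l\<in>UNIV-{i}. if l = j then f l * a else 0)"
    by (rule sum.cong) auto
  also have "\<dots> = f j * a" using assms by simp
  finally show ?thesis .
qed

context setting begin

lemma bil_Phiy: "bil u (Phiy i z) v =
    (\<Sum>k\<in>UNIV-{i}. (1 / (x i z - x k z)) * (dotp u (Pm i z *v qvec z) * dotp (pvec z v* N k z) v))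
  + (\<Sum>l\<in>UNIV-{i}. (1 / (x i z - x l z)) * (dotp u (N l z *v qvec z) * dotp (pvec z v* Pm i z) v))
  + bil (pvec z) (N i z) (qvec z) * (\<Sum>k\<in>UNIV-{i}. PiP i k z * (bil u (N i z) v - bil u (N k z) v))"
  by (simp add: Phiy_def bil_add bil_sum bil_smat bil_outer bil_diff)

lemma PP: "z \<in> S \<Longrightarrow> i \<noteq> j \<Longrightarrow> Pm j z ** Pm i z = 0"
  by (simp add: Pm_eq smat_mult_left smat_mult_right NN)

lemma cj_split: "i \<noteq> j \<Longrightarrow> cj i z = (x i z - x j z) * PiP i j z"
proof -
  assume ij: "i \<noteq> j"
  have "cj i z = (x i z - x j z) * (\<Prod>m\<in>UNIV-{i}-{j}. x i z - x m z)"
    unfolding cj_def using ij by (subst prod.remove[of "UNIV-{i}" j]) auto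
  then show ?thesis by (simp add: PiP_def)
qed

lemma Y_eq: "z \<in> S \<Longrightarrow> bil (pvec z) (Pm i z) (qvec z) = cj i z * bil (pvec z) (N i z) (qvec z)"
  by (simp add: Pm_eq bil_smat)

lemma S1_zero: assumes z: "z \<in> S" and ij: "i \<noteq> j"
  shows "bil (pvec z v* Pm j z) (Phiy i z) (qvec z) = 0"
proof -
  let ?p = "pvec z" and ?q = "qvec z"
  let ?Y = "\<lambda>k. bil ?p (Pm k z) ?q" and ?w = "\<lambda>k. bil ?p (N k z) ?q"
  have dA: "dotp (?p v* Pm j z) (Pm i z *v ?q) = 0"
    using PP[OF z ij] by (simp add: dotp_vm bil_mv)
  have dB: "dotp (?p v* Pm j z) (N l z *v ?q) = (if l = j then ?Y j else 0)" for l
    by (simp add: dotp_vm bil_mv PN[OF z])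
  have dB2: "dotp (?p v* Pm i z) ?q = ?Y i" by (simp add: dotp_vm)
  have dC: "bil (?p v* Pm j z) (N k z) ?q = (if k = j then ?Y j else 0)" for k
    by (simp add: bil_vm PN[OF z])
  have t1: "(\<Sum>k\<in>UNIV-{i}. (1 / (x i z - x k z)) * (dotp (?p v* Pm j z) (Pm i z *v ?q) * dotp (?p v* N k z) ?q)) = 0"
    by (simp add: dA)
  have t2: "(\<Sum>l\<in>UNIV-{i}. (1 / (x i z - x l z)) * (dotp (?p v* Pm j z) (N l z *v ?q) * dotp (?p v* Pm i z) ?q))
      = (1 / (x i z - x j z)) * (?Y j * ?Y i)"
  proof -
    have "(\<Sum>l\<in>UNIV-{i}. (1 / (x i z - x l z)) * (dotp (?p v* Pm j z) (N l z *v ?q) * dotp (?p v* Pm i z) ?q))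
        = (\<Sum>l\<in>UNIV-{i}. ((1 / (x i z - x l z)) * ?Y i) * (if l = j then ?Y j else 0))"
      by (rule sum.cong[OF refl]) (simp add: dB dB2)
    also have "\<dots> = (1 / (x i z - x j z)) * ?Y i * ?Y j" using ij by (subst sum_if_rm) auto
    finally show ?thesis by simp
  qed
  have t3: "(\<Sum>k\<in>UNIV-{i}. PiP i k z * (bil (?p v* Pm j z) (N i z) ?q - bil (?p v* Pm j z) (N k z) ?q))
      = - (PiP i j z * ?Y j)"
  proof -
    have "(\<Sum>k\<in>UNIV-{i}. PiP i k z * (bil (?p v* Pm j z) (N i z) ?q - bil (?p v* Pm j z) (N k z) ?q))
        = (\<Sum>k\<in>UNIV-{i}. (- PiP i k z) * (if k = j then ?Y j else 0))"
      by (rule sum.cong[OF refl]) (use ij in \<open>simp add: dC\<close>)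
    also have "\<dots> = - PiP i j z * ?Y j" using ij by (subst sum_if_rm) auto
    finally show ?thesis by simp
  qed
  have xne: "x i z - x j z \<noteq> 0" using x_dist[OF z ij] by simp
  have "bil (pvec z v* Pm j z) (Phiy i z) (qvec z) = (1 / (x i z - x j z)) * (?Y j * ?Y i) - ?w i * (PiP i j z * ?Y j)"
    unfolding bil_Phiy t1 t2 t3 by simp
  also have "\<dots> = 0"
    using xne by (simp add: Y_eq[OF z, of i] cj_split[OF ij])
  finally show ?thesis .
qed

lemma S2_zero: assumes z: "z \<in> S" and ij: "i \<noteq> j"
  shows "bil (pvec z) (Phiy j z) (Pm i z *v qvec z) = 0"
proof -
  let ?p = "pvec z" and ?q = "qvec z"
  let ?Y = "\<lambda>k. bil ?p (Pm k z) ?q" and ?w = "\<lambda>k. bil ?p (N k z) ?q"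
  have ji: "j \<noteq> i" using ij by simp
  have dA: "dotp (?p v* Pm j z) (Pm i z *v ?q) = 0"
    using PP[OF z ij] by (simp add: dotp_vm bil_mv)
  have dA2: "dotp ?p (Pm j z *v ?q) = ?Y j" by (simp add: dotp_mv)
  have dB: "dotp (?p v* N k z) (Pm i z *v ?q) = (if k = i then ?Y i else 0)" for k
    by (simp add: dotp_vm bil_mv NP[OF z])
  have dC: "bil ?p (N k z) (Pm i z *v ?q) = (if k = i then ?Y i else 0)" for k
    by (simp add: bil_mv NP[OF z])
  have t1: "(\<Sum>k\<in>UNIV-{j}. (1 / (x j z - x k z)) * (dotp ?p (Pm j z *v ?q) * dotp (?p v* N k z) (Pm i z *v ?q)))
      = (1 / (x j z - x i z)) * (?Y j * ?Y i)"
  proof -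
    have "(\<Sum>k\<in>UNIV-{j}. (1 / (x j z - x k z)) * (dotp ?p (Pm j z *v ?q) * dotp (?p v* N k z) (Pm i z *v ?q)))
        = (\<Sum>k\<in>UNIV-{j}. ((1 / (x j z - x k z)) * ?Y j) * (if k = i then ?Y i else 0))"
      by (rule sum.cong[OF refl]) (simp add: dB dA2)
    also have "\<dots> = (1 / (x j z - x i z)) * ?Y j * ?Y i" using ji by (subst sum_if_rm) auto
    finally show ?thesis by simp
  qed
  have t2: "(\<Sum>l\<in>UNIV-{j}. (1 / (x j z - x l z)) * (dotp ?p (N l z *v ?q) * dotp (?p v* Pm j z) (Pm i z *v ?q))) = 0"
    by (simp add: dA)
  have t3: "(\<Sum>k\<in>UNIV-{j}. PiP j k z * (bil ?p (N j z) (Pm i z *v ?q) - bil ?p (N k z) (Pm i z *v ?q)))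
      = - (PiP j i z * ?Y i)"
  proof -
    have "(\<Sum>k\<in>UNIV-{j}. PiP j k z * (bil ?p (N j z) (Pm i z *v ?q) - bil ?p (N k z) (Pm i z *v ?q)))
        = (\<Sum>k\<in>UNIV-{j}. (- PiP j k z) * (if k = i then ?Y i else 0))"
      by (rule sum.cong[OF refl]) (use ij in \<open>simp add: dC\<close>)
    also have "\<dots> = - PiP j i z * ?Y i" using ji by (subst sum_if_rm) auto
    finally show ?thesis by simp
  qed
  have xne: "x j z - x i z \<noteq> 0" using x_dist[OF z ji] by simp
  have "bil (pvec z) (Phiy j z) (Pm i z *v qvec z) = (1 / (x j z - x i z)) * (?Y j * ?Y i) - ?w j * (PiP j i z * ?Y i)"
    unfolding bil_Phiy t1 t2 t3 by simp
  also have "\<dots> = 0"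
    using xne by (simp add: Y_eq[OF z, of j] cj_split[OF ji])
  finally show ?thesis .
qed

lemma y_bil: "y_fun x j z = bil (pvec z) (Pm j z) (qvec z)"
  by (simp add: y_eq bil_def)

lemma thm_xx: "z \<in> S \<Longrightarrow> pbracket (x i) (x j) z = 0"
proof -
  assume z: "z \<in> S"
  have "pbracket (x i) (x j) z = bil (Psi (x j) z) (N i z) (qvec z)"
    by (rule pb_comm) (simp_all add: Phi_x Psi_x[OF z] AN[OF z] NA[OF z])
  then show ?thesis by (simp add: Psi_x[OF z])
qed

lemma thm_xy: "z \<in> S \<Longrightarrow> pbracket (x i) (y_fun x j) z = (if i = j then y_fun x j z else 0)"
proof -
  assume z: "z \<in> S"
  have "pbracket (x i) (y_fun x j) z = bil (Psi (y_fun x j) z) (N i z) (qvec z)"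
    by (rule pb_comm) (simp_all add: Phi_x Psi_x[OF z] AN[OF z] NA[OF z])
  also have "\<dots> = bil (pvec z) (Pm j z ** N i z) (qvec z)"
    by (simp add: Psi_y[OF z] bil_vm)
  also have "\<dots> = (if i = j then y_fun x j z else 0)"
    by (simp add: PN[OF z] y_bil)
  finally show ?thesis .
qed

lemma thm_yy: "z \<in> S \<Longrightarrow> pbracket (y_fun x i) (y_fun x j) z = 0"
proof (cases "i = j")
  case True then show ?thesis by (simp add: pb_self)
next
  case False
  assume z: "z \<in> S"
  have "pbracket (y_fun x i) (y_fun x j) z
      = trace ((outer (qvec z) (pvec z v* Pm i z) - outer (Pm i z *v qvec z) (pvec z)) ** Phiy j z)
        + trace (outer (qvec z) (pvec z v* Pm j z) ** Phiy i z)
        - trace (outer (qvec z) (pvec z v* Pm i z) ** Phiy j z)"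
    by (simp add: pbracket_trace Phi_y[OF z] Psi_y[OF z] X_formula[OF z])
  also have "\<dots> = bil (pvec z v* Pm j z) (Phiy i z) (qvec z) - bil (pvec z) (Phiy j z) (Pm i z *v qvec z)"
    by (simp add: matrix_diff_rdistrib trace_sub trace_outer)
  also have "\<dots> = 0" using S1_zero[OF z False] S2_zero[OF z False] by simp
  finally show ?thesis .
qed

end

theorem proposition3p7:
  fixes S :: "'d::finite pt set"
    and x :: "'d \<Rightarrow> 'd pt \<Rightarrow> complex"
  assumes "open S"
    and "\<And>i. x i differentiable_on S"
    and "\<And>z i j. z \<in> S \<Longrightarrow> i \<noteq> j \<Longrightarrow> x i z \<noteq> x j z"
    and "\<And>z t. z \<in> S \<Longrightarrow> det (mat t - Amat z) = (\<Prod>i\<in>UNIV. t - x i z)"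
    and "z \<in> S"
  shows "pbracket (x i) (x j) z = 0
       \<and> pbracket (y_fun x i) (y_fun x j) z = 0
       \<and> pbracket (x i) (y_fun x j) z = (if i = j then y_fun x j z else 0)"
proof -
  interpret setting S x
    by (unfold_locales) (use assms in auto)
  show ?thesis using thm_xx thm_yy thm_xy assms(5) by blast
qed



end
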